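(* Let $s\ge t$ be real numbers, $0<p_0<p_1\le\infty$ and $0<q_0,q_1\le\infty$, and assume that either $s>t$ or $q_0<q_1$. Then the embedding $$\ell^{q_0}\big(2^{js}\cdot\ell^{p_0}\big)_{j=0}^\infty\hookrightarrow\ell^{q_1}\big(2^{jt}\cdot\ell^{p_1}\big)_{j=0}^\infty$$ is finitely strictly singular (and in particular strictly singular).
   Context: For quasi-normed spaces $X_j$ and $q\in(0,\infty]$, $\ell^q(X_j)_{j=0}^\infty$ is the space of sequences $x=(x_j)_{j\ge0}$, $x_j\in X_j$, with $\|x\|=(\sum_j\|x_j\|_{X_j}^q)^{1/q}<\infty$ (supremum if $q=\infty$). For $\lambda>0$, $\lambda\cdot\ell^p$ denotes $\ell^p=\ell^p(\mathbb{N})$ with quasi-norm $\|y\|_{\lambda\cdot\ell^p}=\lambda\|y\|_{\ell^p}$; so $\|x\|_{\ell^q(2^{js}\cdot\ell^p)_j}=(\sum_j(2^{js}\|x_j\|_{\ell^p})^q)^{1/q}$. Bernstein numbers: $b_n(T)=\sup\{\inf_{x\in X_n,\|x\|=1}\|Tx\|:\dim X_n=n\}$; $T$ finitely strictly singular means $b_n(T)\to0$; strictly singular means no infinite-dimensional subspace on which $T$ is an isomorphism onto its image. *)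

theory Defs
  imports "HOL-Analysis.Analysis"
begin

text \<open>Exponents p, q range over (0, \<infinity>] and are modelled as extended reals.\<close>

definition lp_mem :: "ereal \<Rightarrow> (nat \<Rightarrow> real) \<Rightarrow> bool" where
  "lp_mem p y \<longleftrightarrow>
     (if p = \<infinity> then bdd_above (range (\<lambda>k. \<bar>y k\<bar>))
      else summable (\<lambda>k. \<bar>y k\<bar> powr real_of_ereal p))"

definition lp_norm :: "ereal \<Rightarrow> (nat \<Rightarrow> real) \<Rightarrow> real" where
  "lp_norm p y =
     (if p = \<infinity> then (SUP k. \<bar>y k\<bar>)
      else (\<Sum>k. \<bar>y k\<bar> powr real_of_ereal p) powr (1 / real_of_ereal p))"

text \<open>Elements of the mixed space: double sequences x, x j = j-th block.\<close>
type_synonym dseq = "nat \<Rightarrow> nat \<Rightarrow> real"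

definition mixed_mem :: "ereal \<Rightarrow> real \<Rightarrow> ereal \<Rightarrow> dseq \<Rightarrow> bool" where
  "mixed_mem q s p x \<longleftrightarrow>
     (\<forall>j. lp_mem p (x j)) \<and> lp_mem q (\<lambda>j. 2 powr (real j * s) * lp_norm p (x j))"

definition mixed_norm :: "ereal \<Rightarrow> real \<Rightarrow> ereal \<Rightarrow> dseq \<Rightarrow> real" where
  "mixed_norm q s p x = lp_norm q (\<lambda>j. 2 powr (real j * s) * lp_norm p (x j))"

definition mixed_space :: "ereal \<Rightarrow> real \<Rightarrow> ereal \<Rightarrow> dseq set" where
  "mixed_space q s p = {x. mixed_mem q s p x}"

definition lin_subspace :: "dseq set \<Rightarrow> bool" where
  "lin_subspace V \<longleftrightarrow> (\<lambda>j k. 0) \<in> V \<and>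
     (\<forall>x\<in>V. \<forall>y\<in>V. (\<lambda>j k. x j k + y j k) \<in> V) \<and>
     (\<forall>c. \<forall>x\<in>V. (\<lambda>j k. c * x j k) \<in> V)"

definition lin_comb :: "nat \<Rightarrow> (nat \<Rightarrow> real) \<Rightarrow> (nat \<Rightarrow> dseq) \<Rightarrow> dseq" where
  "lin_comb n c v = (\<lambda>j k. \<Sum>i<n. c i * v i j k)"

definition lin_indep :: "nat \<Rightarrow> (nat \<Rightarrow> dseq) \<Rightarrow> bool" where
  "lin_indep n v \<longleftrightarrow> (\<forall>c. lin_comb n c v = (\<lambda>j k. 0) \<longrightarrow> (\<forall>i<n. c i = 0))"

definition subspace_dim :: "dseq set \<Rightarrow> nat \<Rightarrow> dseq set \<Rightarrow> bool" where
  "subspace_dim X n V \<longleftrightarrow> V \<subseteq> X \<and>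
     (\<exists>v. lin_indep n v \<and> V = {lin_comb n c v | c. True})"

definition inf_dim_subspace :: "dseq set \<Rightarrow> dseq set \<Rightarrow> bool" where
  "inf_dim_subspace X M \<longleftrightarrow> M \<subseteq> X \<and> lin_subspace M \<and>
     (\<forall>n. \<exists>v. (\<forall>i<n. v i \<in> M) \<and> lin_indep n v)"

definition bernstein ::
  "dseq set \<Rightarrow> (dseq \<Rightarrow> real) \<Rightarrow> (dseq \<Rightarrow> real) \<Rightarrow> (dseq \<Rightarrow> dseq) \<Rightarrow> nat \<Rightarrow> ereal" where
  "bernstein X nX nY T n =
     (SUP V \<in> {V. subspace_dim X n V}. INF x \<in> {x \<in> V. nX x = 1}. ereal (nY (T x)))"

definition fin_strictly_singular ::
  "dseq set \<Rightarrow> (dseq \<Rightarrow> real) \<Rightarrow> (dseq \<Rightarrow> real) \<Rightarrow> (dseq \<Rightarrow> dseq) \<Rightarrow> bool" where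
  "fin_strictly_singular X nX nY T \<longleftrightarrow> (bernstein X nX nY T \<longlonglongrightarrow> 0)"

definition strictly_singular ::
  "dseq set \<Rightarrow> (dseq \<Rightarrow> real) \<Rightarrow> (dseq \<Rightarrow> real) \<Rightarrow> (dseq \<Rightarrow> dseq) \<Rightarrow> bool" where
  "strictly_singular X nX nY T \<longleftrightarrow>
     \<not> (\<exists>M. inf_dim_subspace X M \<and>
           (\<exists>c C. 0 < c \<and> 0 < C \<and> (\<forall>x\<in>M. c * nX x \<le> nY (T x) \<and> nY (T x) \<le> C * nX x)))"

end

theory Submission
  imports Defs
begin


lemma lp_fin: "lp_mem (ereal P) y \<longleftrightarrow> summable (\<lambda>k. \<bar>y k\<bar> powr P)"
  "lp_norm (ereal P) y = (\<Sum>k. \<bar>y k\<bar> powr P) powr (1/P)"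
  by (simp_all add: lp_mem_def lp_norm_def)

lemma lp_inf: "lp_mem \<infinity> y \<longleftrightarrow> bdd_above (range (\<lambda>k. \<bar>y k\<bar>))"
  "lp_norm \<infinity> y = (SUP k. \<bar>y k\<bar>)"
  by (simp_all add: lp_mem_def lp_norm_def)

lemma pos_ereal_cases:
  assumes "0 < (p::ereal)"
  obtains P where "p = ereal P" "0 < P" | "p = \<infinity>"
  using assms by (cases p) auto

lemma powr_inv_powr: "0 \<le> (x::real) \<Longrightarrow> 0 < P \<Longrightarrow> (x powr P) powr (1/P) = x"
  by (simp add: powr_powr)

lemma powr_powr_inv: "0 \<le> (x::real) \<Longrightarrow> 0 < P \<Longrightarrow> (x powr (1/P)) powr P = x"
  by (simp add: powr_powr)

lemma lp_le_norm:
  assumes "0 < p" "lp_mem p y"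
  shows "\<bar>y k\<bar> \<le> lp_norm p y"
  using assms(1)
proof (cases rule: pos_ereal_cases)
  case (1 P)
  have s: "summable (\<lambda>k. \<bar>y k\<bar> powr P)" using assms 1 by (simp add: lp_fin)
  have "sum (\<lambda>k. \<bar>y k\<bar> powr P) {k} \<le> (\<Sum>k. \<bar>y k\<bar> powr P)"
    by (rule sum_le_suminf[OF s]) auto
  hence "\<bar>y k\<bar> powr P \<le> (\<Sum>k. \<bar>y k\<bar> powr P)" by simp
  hence "(\<bar>y k\<bar> powr P) powr (1/P) \<le> (\<Sum>k. \<bar>y k\<bar> powr P) powr (1/P)"
    by (intro powr_mono2) (use 1 in auto)
  thus ?thesis using 1 by (simp add: powr_inv_powr lp_fin)
next
  case 2
  thus ?thesis using assms by (auto simp: lp_inf intro: cSUP_upper)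
qed

lemma lp_norm_nonneg:
  assumes "0 < p" "lp_mem p y"
  shows "0 \<le> lp_norm p y"
  using lp_le_norm[OF assms, of 0] by linarith

lemma lp_mono:
  assumes "0 < p" "lp_mem p z" "\<And>k. \<bar>y k\<bar> \<le> \<bar>z k\<bar>"
  shows "lp_mem p y \<and> lp_norm p y \<le> lp_norm p z"
  using assms(1)
proof (cases rule: pos_ereal_cases)
  case (1 P)
  have s: "summable (\<lambda>k. \<bar>z k\<bar> powr P)" using assms 1 by (simp add: lp_fin)
  have le: "\<bar>y k\<bar> powr P \<le> \<bar>z k\<bar> powr P" for k
    using assms(3)[of k] 1 by (intro powr_mono2) auto
  have s2: "summable (\<lambda>k. \<bar>y k\<bar> powr P)"
    by (rule summable_comparison_test'[OF s, of 0]) (use le in auto)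
  have "(\<Sum>k. \<bar>y k\<bar> powr P) \<le> (\<Sum>k. \<bar>z k\<bar> powr P)"
    by (rule suminf_le[OF le s2 s])
  hence "(\<Sum>k. \<bar>y k\<bar> powr P) powr (1/P) \<le> (\<Sum>k. \<bar>z k\<bar> powr P) powr (1/P)"
    using 1 by (intro powr_mono2) (auto intro: suminf_nonneg s2)
  thus ?thesis using s2 1 by (simp add: lp_fin)
next
  case 2
  have b: "bdd_above (range (\<lambda>k. \<bar>z k\<bar>))" using assms 2 by (simp add: lp_inf)
  have b2: "bdd_above (range (\<lambda>k. \<bar>y k\<bar>))"
    using b assms(3) by (auto simp: bdd_above_def intro: order_trans)
  have "(SUP k. \<bar>y k\<bar>) \<le> (SUP k. \<bar>z k\<bar>)"
    by (rule cSUP_mono) (use b assms(3) in auto)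
  thus ?thesis using b2 2 by (simp add: lp_inf)
qed

lemma lp_zero: "0 < p \<Longrightarrow> lp_mem p (\<lambda>k. 0) \<and> lp_norm p (\<lambda>k. 0) = 0"
  by (cases rule: pos_ereal_cases) (auto simp: lp_fin lp_inf)

lemma lp_zero_iff:
  assumes "0 < p" "lp_mem p y" "lp_norm p y = 0"
  shows "y k = 0"
  using lp_le_norm[OF assms(1,2), of k] assms(3) by simp

lemma lp_homog:
  assumes "0 < p" "lp_mem p y"
  shows "lp_mem p (\<lambda>k. c * y k) \<and> lp_norm p (\<lambda>k. c * y k) = \<bar>c\<bar> * lp_norm p y"
  using assms(1)
proof (cases rule: pos_ereal_cases)
  case (1 P)
  have s: "summable (\<lambda>k. \<bar>y k\<bar> powr P)" using assms 1 by (simp add: lp_fin)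
  have eq: "\<bar>c * y k\<bar> powr P = \<bar>c\<bar> powr P * \<bar>y k\<bar> powr P" for k
    by (simp add: abs_mult powr_mult)
  have s2: "summable (\<lambda>k. \<bar>c * y k\<bar> powr P)" unfolding eq by (intro summable_mult s)
  have "(\<Sum>k. \<bar>c * y k\<bar> powr P) powr (1/P) = (\<bar>c\<bar> powr P * (\<Sum>k. \<bar>y k\<bar> powr P)) powr (1/P)"
    unfolding eq using suminf_mult[OF s] by simp
  also have "\<dots> = \<bar>c\<bar> * (\<Sum>k. \<bar>y k\<bar> powr P) powr (1/P)"
    using 1 by (simp add: powr_mult suminf_nonneg[OF s] powr_inv_powr)
  finally show ?thesis using s2 1 by (simp add: lp_fin)
next
  case 2
  have b: "bdd_above (range (\<lambda>k. \<bar>y k\<bar>))" using assms 2 by (simp add: lp_inf)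
  have b2: "bdd_above (range (\<lambda>k. \<bar>c * y k\<bar>))"
  proof -
    obtain B where "\<And>k. \<bar>y k\<bar> \<le> B" using b by (auto simp: bdd_above_def)
    hence "\<bar>c * y k\<bar> \<le> \<bar>c\<bar> * B" for k by (simp add: abs_mult mult_left_mono)
    thus ?thesis by (auto simp: bdd_above_def)
  qed
  have "(SUP k. \<bar>c * y k\<bar>) = \<bar>c\<bar> * (SUP k. \<bar>y k\<bar>)"
  proof (cases "c = 0")
    case True thus ?thesis by simp
  next
    case False
    show ?thesis
    proof (rule antisym)
      show "(SUP k. \<bar>c * y k\<bar>) \<le> \<bar>c\<bar> * (SUP k. \<bar>y k\<bar>)"
        by (rule cSUP_least) (auto simp: abs_mult intro!: mult_left_mono cSUP_upper b)
      have "(SUP k. \<bar>y k\<bar>) \<le> (SUP k. \<bar>c * y k\<bar>) / \<bar>c\<bar>"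
      proof (rule cSUP_least)
        fix k
        have "\<bar>c * y k\<bar> \<le> (SUP k. \<bar>c * y k\<bar>)" by (rule cSUP_upper[OF _ b2]) auto
        thus "\<bar>y k\<bar> \<le> (SUP k. \<bar>c * y k\<bar>) / \<bar>c\<bar>" using False
          by (simp add: abs_mult field_simps)
      qed auto
      thus "\<bar>c\<bar> * (SUP k. \<bar>y k\<bar>) \<le> (SUP k. \<bar>c * y k\<bar>)" using False
        by (simp add: field_simps)
    qed
  qed
  thus ?thesis using b2 2 by (simp add: lp_inf)
qed

lemma lp_pow_est:
  assumes "0 < P" "P \<le> R" "lp_mem (ereal P) y" "\<And>k. \<bar>y k\<bar> \<le> M"
  shows "summable (\<lambda>k. \<bar>y k\<bar> powr R) \<and>
    (\<Sum>k. \<bar>y k\<bar> powr R) \<le> M powr (R - P) * (\<Sum>k. \<bar>y k\<bar> powr P)"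
proof -
  have s: "summable (\<lambda>k. \<bar>y k\<bar> powr P)" using assms by (simp add: lp_fin)
  have le: "\<bar>y k\<bar> powr R \<le> M powr (R - P) * \<bar>y k\<bar> powr P" for k
  proof -
    have "\<bar>y k\<bar> powr R = \<bar>y k\<bar> powr (R - P) * \<bar>y k\<bar> powr P"
      by (simp flip: powr_add)
    also have "\<dots> \<le> M powr (R - P) * \<bar>y k\<bar> powr P"
      using assms by (intro mult_right_mono powr_mono2) auto
    finally show ?thesis .
  qed
  have s2: "summable (\<lambda>k. \<bar>y k\<bar> powr R)"
    by (rule summable_comparison_test'[OF summable_mult[OF s], of 0]) (use le in auto)
  have "(\<Sum>k. \<bar>y k\<bar> powr R) \<le> (\<Sum>k. M powr (R - P) * \<bar>y k\<bar> powr P)"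
    by (rule suminf_le[OF le s2 summable_mult[OF s]])
  also have "\<dots> = M powr (R - P) * (\<Sum>k. \<bar>y k\<bar> powr P)" by (rule suminf_mult[OF s])
  finally show ?thesis using s2 by simp
qed

lemma lp_incl:
  assumes "0 < P" "ereal P \<le> r" "lp_mem (ereal P) y"
  shows "lp_mem r y \<and> lp_norm r y \<le> lp_norm (ereal P) y"
proof -
  have r0: "0 < r" using assms by (metis ereal_less(2) order_less_le_trans zero_ereal_def)
  show ?thesis using r0
  proof (cases rule: pos_ereal_cases)
    case (1 R)
    have PR: "P \<le> R" using assms 1 by simp
    let ?N = "lp_norm (ereal P) y"
    have bd: "\<bar>y k\<bar> \<le> ?N" for k using lp_le_norm[OF _ assms(3)] assms by simp
    have N0: "0 \<le> ?N" using lp_norm_nonneg[OF _ assms(3)] assms by simp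
    from lp_pow_est[OF assms(1) PR assms(3) bd]
    have e: "summable (\<lambda>k. \<bar>y k\<bar> powr R)"
      "(\<Sum>k. \<bar>y k\<bar> powr R) \<le> ?N powr (R - P) * (\<Sum>k. \<bar>y k\<bar> powr P)" by auto
    have S0: "0 \<le> (\<Sum>k. \<bar>y k\<bar> powr P)" using assms(3) by (auto simp: lp_fin intro: suminf_nonneg)
    have "(\<Sum>k. \<bar>y k\<bar> powr P) = ?N powr P"
      by (simp add: lp_fin powr_powr_inv[OF S0 assms(1)])
    hence "(\<Sum>k. \<bar>y k\<bar> powr R) \<le> ?N powr R" using e(2)
      by (simp flip: powr_add)
    hence "(\<Sum>k. \<bar>y k\<bar> powr R) powr (1/R) \<le> (?N powr R) powr (1/R)"
      using 1 by (intro powr_mono2) (auto intro: suminf_nonneg e(1))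
    also have "\<dots> = ?N" using N0 1 by (simp add: powr_inv_powr)
    finally show ?thesis using 1 e by (simp add: lp_fin)
  next
    case 2
    have bd: "\<bar>y k\<bar> \<le> lp_norm (ereal P) y" for k using lp_le_norm[OF _ assms(3)] assms by simp
    hence b: "bdd_above (range (\<lambda>k. \<bar>y k\<bar>))" by (auto simp: bdd_above_def)
    have "(SUP k. \<bar>y k\<bar>) \<le> lp_norm (ereal P) y" by (rule cSUP_least) (use bd in auto)
    thus ?thesis using b 2 by (simp add: lp_inf)
  qed
qed

lemma lp_interp:
  assumes "0 < P" "ereal P < r" "lp_mem (ereal P) y" "\<And>k. \<bar>y k\<bar> \<le> M" "r \<noteq> \<infinity>"
  shows "lp_mem r y \<and> lp_norm r y \<le> M powr (1 - P / real_of_ereal r) * lp_norm (ereal P) y powr (P / real_of_ereal r)"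
proof -
  obtain R where R: "r = ereal R" using assms(2,5) by (cases r) auto
  have PR: "P < R" using assms R by simp
  have M0: "0 \<le> M" using assms(4)[of 0] by simp
  from lp_pow_est[OF assms(1) _ assms(3,4), of R] PR
  have e: "summable (\<lambda>k. \<bar>y k\<bar> powr R)"
    "(\<Sum>k. \<bar>y k\<bar> powr R) \<le> M powr (R - P) * (\<Sum>k. \<bar>y k\<bar> powr P)" by auto
  have S0: "0 \<le> (\<Sum>k. \<bar>y k\<bar> powr P)" using assms(3) by (auto simp: lp_fin intro: suminf_nonneg)
  have "(\<Sum>k. \<bar>y k\<bar> powr R) powr (1/R) \<le> (M powr (R - P) * (\<Sum>k. \<bar>y k\<bar> powr P)) powr (1/R)"
    using PR assms(1) by (intro powr_mono2 e) (auto intro: suminf_nonneg e(1))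
  also have "\<dots> = M powr ((R - P)/R) * (\<Sum>k. \<bar>y k\<bar> powr P) powr (1/R)"
    using M0 S0 by (simp add: powr_mult powr_powr)
  also have "(\<Sum>k. \<bar>y k\<bar> powr P) powr (1/R) = ((\<Sum>k. \<bar>y k\<bar> powr P) powr (1/P)) powr (P/R)"
    using assms(1) by (simp add: powr_powr)
  also have "(R - P)/R = 1 - P/R" using PR assms(1) by (simp add: field_simps)
  finally show ?thesis using e R by (simp add: lp_fin)
qed

lemma lp_c0:
  assumes "0 < P" "lp_mem (ereal P) y" "0 < e"
  shows "finite {k. e \<le> \<bar>y k\<bar>}"
proof -
  have "(\<lambda>k. \<bar>y k\<bar> powr P) \<longlonglongrightarrow> 0" using assms by (intro summable_LIMSEQ_zero) (simp add: lp_fin)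
  hence "\<forall>r>0. \<exists>no. \<forall>n\<ge>no. \<bar>y n\<bar> powr P < r" by (simp add: LIMSEQ_iff)
  moreover have "0 < e powr P" using assms by simp
  ultimately obtain N where N: "\<And>k. k \<ge> N \<Longrightarrow> \<bar>y k\<bar> powr P < e powr P"
    by blast
  have "{k. e \<le> \<bar>y k\<bar>} \<subseteq> {..<N}"
  proof
    fix k assume "k \<in> {k. e \<le> \<bar>y k\<bar>}"
    hence "e powr P \<le> \<bar>y k\<bar> powr P" using assms by (auto intro: powr_mono2)
    thus "k \<in> {..<N}" using N[of k] by (cases "k \<ge> N") auto
  qed
  thus ?thesis by (rule finite_subset) auto
qed

lemma lp_finsupp:
  assumes "0 < p" "\<And>k. k \<ge> K \<Longrightarrow> y k = 0"
  shows "lp_mem p y"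
  using assms(1)
proof (cases rule: pos_ereal_cases)
  case (1 P)
  have "summable (\<lambda>k. \<bar>y k\<bar> powr P)"
    by (rule sums_summable[OF sums_finite[of "{..<K}"]]) (use assms in auto)
  thus ?thesis using 1 by (simp add: lp_fin)
next
  case 2
  have "\<bar>y k\<bar> \<le> Max ((\<lambda>k. \<bar>y k\<bar>) ` {..K})" for k
  proof (cases "k \<le> K")
    case True thus ?thesis by (intro Max_ge) auto
  next
    case False
    have "\<bar>y K\<bar> \<le> Max ((\<lambda>k. \<bar>y k\<bar>) ` {..K})" by (intro Max_ge) auto
    moreover have "y k = 0" using assms(2)[of k] False by simp
    ultimately show ?thesis using abs_ge_zero[of "y K"] by linarith
  qed
  thus ?thesis using 2 by (auto simp: lp_inf bdd_above_def)
qed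

lemma lp_geom:
  assumes "0 < p" "0 < d"
  shows "lp_mem p (\<lambda>j. 2 powr (- (real j * d)))"
  using assms(1)
proof (cases rule: pos_ereal_cases)
  case (1 P)
  have eq: "\<bar>2 powr (- (real j * d))\<bar> powr P = (2 powr (- d * P)) ^ j" for j
    by (simp add: powr_powr flip: powr_realpow) (simp add: algebra_simps)
  have "2 powr (- d * P) < 1" using assms 1 by (simp add: powr_less_one)
  hence "summable (\<lambda>j. (2 powr (- d * P)) ^ j)" by (intro summable_geometric) simp
  hence "summable (\<lambda>j. \<bar>2 powr (- (real j * d))\<bar> powr P)" by (simp only: eq)
  thus ?thesis using 1 by (simp add: lp_fin)
next
  case 2
  have "\<bar>2 powr (- (real j * d))\<bar> \<le> 1" for j
    using powr_mono[of "- (real j * d)" 0 2] assms by simp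
  thus ?thesis using 2 by (auto simp: lp_inf bdd_above_def)
qed


lemma kernel_exists:
  fixes v :: "nat \<Rightarrow> 'i \<Rightarrow> real"
  assumes "finite S" "finite L" "card S < card L"
  shows "\<exists>d. (\<exists>l\<in>L. d l \<noteq> 0) \<and> (\<forall>i\<in>S. (\<Sum>l\<in>L. d l * v l i) = 0)"
  using assms
proof (induction S arbitrary: L v rule: finite_induct)
  case empty
  then obtain l where "l \<in> L" by fastforce
  then show ?case by (intro exI[of _ "\<lambda>_. 1"]) auto
next
  case (insert a S)
  have cS: "card (insert a S) = Suc (card S)" using insert by simp
  show ?case
  proof (cases "\<forall>l\<in>L. v l a = 0")
    case True
    have "card S < card L" using insert cS by simp
    from insert.IH[OF insert.prems(1) this] obtain d where
      d: "\<exists>l\<in>L. d l \<noteq> 0" "\<forall>i\<in>S. (\<Sum>l\<in>L. d l * v l i) = 0" by blast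
    show ?thesis using d True by (intro exI[of _ d]) auto
  next
    case False
    then obtain l0 where l0: "l0 \<in> L" "v l0 a \<noteq> 0" by auto
    define L' where "L' = L - {l0}"
    define v' where "v' = (\<lambda>l i. v l i - (v l a / v l0 a) * v l0 i)"
    have fL': "finite L'" using insert by (simp add: L'_def)
    have "card L' = card L - 1" using l0 insert by (simp add: L'_def)
    hence cL': "card S < card L'" using insert cS by simp
    from insert.IH[OF fL' cL', of v'] obtain d' where
      d': "\<exists>l\<in>L'. d' l \<noteq> 0" "\<forall>i\<in>S. (\<Sum>l\<in>L'. d' l * v' l i) = 0" by blast
    define d where "d = (\<lambda>l. if l = l0 then - (\<Sum>l\<in>L'. d' l * v l a) / v l0 a else d' l)"
    have key: "(\<Sum>l\<in>L. d l * v l i) = (\<Sum>l\<in>L'. d' l * v' l i)" for i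
    proof -
      have "(\<Sum>l\<in>L. d l * v l i) = d l0 * v l0 i + (\<Sum>l\<in>L'. d l * v l i)"
        using sum.remove[OF insert.prems(1) l0(1)] by (simp add: L'_def)
      also have "(\<Sum>l\<in>L'. d l * v l i) = (\<Sum>l\<in>L'. d' l * v l i)"
        by (rule sum.cong) (auto simp: d_def L'_def)
      also have "(\<Sum>l\<in>L'. d' l * v' l i) = (\<Sum>l\<in>L'. d' l * v l i) - (\<Sum>l\<in>L'. d' l * v l a) / v l0 a * v l0 i"
      proof -
        have "(\<Sum>l\<in>L'. d' l * (v l a / v l0 a * v l0 i)) = (\<Sum>l\<in>L'. d' l * v l a) * (v l0 i / v l0 a)"
          unfolding sum_distrib_right by (rule sum.cong) (auto simp: field_simps l0(2))
        moreover have "(\<Sum>l\<in>L'. d' l * v' l i) = (\<Sum>l\<in>L'. d' l * v l i) - (\<Sum>l\<in>L'. d' l * (v l a / v l0 a * v l0 i))"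
          unfolding v'_def right_diff_distrib sum_subtractf ..
        ultimately show ?thesis by simp
      qed
      ultimately show ?thesis by (simp add: d_def)
    qed
    have z: "v' l a = 0" for l using l0 by (simp add: v'_def)
    show ?thesis
    proof (intro exI[of _ d] conjI)
      show "\<exists>l\<in>L. d l \<noteq> 0" using d'(1) by (auto simp: d_def L'_def)
      show "\<forall>i\<in>insert a S. (\<Sum>l\<in>L. d l * v l i) = 0"
        using d'(2) by (auto simp: key z)
    qed
  qed
qed

definition c0 :: "('i \<Rightarrow> real) \<Rightarrow> bool" where
  "c0 f \<longleftrightarrow> (\<forall>e>0. finite {i. e \<le> \<bar>f i\<bar>})"

lemma c0_bounded:
  assumes "c0 f" obtains B where "0 < B" "\<And>i. \<bar>f i\<bar> \<le> B"
proof -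
  have fin: "finite {i. 1 \<le> \<bar>f i\<bar>}" using assms by (auto simp: c0_def)
  define B where "B = Max (insert 1 ((\<lambda>i. \<bar>f i\<bar>) ` {i. 1 \<le> \<bar>f i\<bar>}))"
  have B1: "1 \<le> B" unfolding B_def using fin by (intro Max_ge) auto
  have Bi: "\<bar>f i\<bar> \<le> B" for i
  proof (cases "1 \<le> \<bar>f i\<bar>")
    case True thus ?thesis unfolding B_def using fin by (intro Max_ge) auto
  next
    case False
    thus ?thesis using B1 by simp
  qed
  show ?thesis by (rule that[of B]) (use B1 Bi in auto)
qed

lemma c0_add: "c0 f \<Longrightarrow> c0 g \<Longrightarrow> c0 (\<lambda>i. f i + g i)"
  unfolding c0_def
proof (intro allI impI)
  fix e :: real assume "\<forall>e>0. finite {i. e \<le> \<bar>f i\<bar>}" "\<forall>e>0. finite {i. e \<le> \<bar>g i\<bar>}" "0 < e"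
  hence "finite {i. e/2 \<le> \<bar>f i\<bar>}" "finite {i. e/2 \<le> \<bar>g i\<bar>}"
    using half_gt_zero by blast+
  hence "finite ({i. e/2 \<le> \<bar>f i\<bar>} \<union> {i. e/2 \<le> \<bar>g i\<bar>})" by blast
  moreover have "{i. e \<le> \<bar>f i + g i\<bar>} \<subseteq> {i. e/2 \<le> \<bar>f i\<bar>} \<union> {i. e/2 \<le> \<bar>g i\<bar>}" by auto
  ultimately show "finite {i. e \<le> \<bar>f i + g i\<bar>}" by (rule finite_subset[rotated])
qed

lemma c0_scale: "c0 f \<Longrightarrow> c0 (\<lambda>i. c * f i)"
  unfolding c0_def
proof (intro allI impI)
  fix e :: real assume a: "\<forall>e>0. finite {i. e \<le> \<bar>f i\<bar>}" "0 < e"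
  show "finite {i. e \<le> \<bar>c * f i\<bar>}"
  proof (cases "c = 0")
    case True thus ?thesis using a by simp
  next
    case False
    have "{i. e \<le> \<bar>c * f i\<bar>} = {i. e / \<bar>c\<bar> \<le> \<bar>f i\<bar>}" using False
      by (auto simp: abs_mult field_simps)
    thus ?thesis using a False by simp
  qed
qed

lemma c0_zero: "c0 (\<lambda>i. 0)" by (simp add: c0_def)

lemma c0_sum: "finite L \<Longrightarrow> (\<And>l. l \<in> L \<Longrightarrow> c0 (v l)) \<Longrightarrow> c0 (\<lambda>i. \<Sum>l\<in>L. c l * v l i)"
proof (induction L rule: finite_induct)
  case empty thus ?case by (simp add: c0_zero)
next
  case (insert a L)
  thus ?case by (simp add: c0_add c0_scale)
qed

lemma peak_step:
  fixes v :: "nat \<Rightarrow> 'i \<Rightarrow> real"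
  assumes indep: "\<And>c. (\<forall>i. (\<Sum>l<n. c l * v l i) = 0) \<Longrightarrow> \<forall>l<n. c l = 0"
    and cz: "\<And>l. l < n \<Longrightarrow> c0 (v l)"
    and bd: "\<forall>i. \<bar>\<Sum>l<n. c l * v l i\<bar> \<le> 1"
    and S: "finite S" "card S = m" "m < n" "\<forall>i\<in>S. \<bar>\<Sum>l<n. c l * v l i\<bar> = 1"
  shows "\<exists>c' S'. (\<forall>i. \<bar>\<Sum>l<n. c' l * v l i\<bar> \<le> 1) \<and> finite S' \<and> card S' = Suc m
     \<and> (\<forall>i\<in>S'. \<bar>\<Sum>l<n. c' l * v l i\<bar> = 1)"
proof -
  obtain d where d: "\<exists>l\<in>{..<n}. d l \<noteq> 0" "\<forall>i\<in>S. (\<Sum>l<n. d l * v l i) = 0"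
    using kernel_exists[OF S(1), of "{..<n}" v] S by auto
  define w where "w = (\<lambda>i. \<Sum>l<n. c l * v l i)"
  define g where "g = (\<lambda>i. \<Sum>l<n. d l * v l i)"
  obtain i1 where i1: "g i1 \<noteq> 0" using indep[of d] d(1) by (auto simp: g_def)
  have c0w: "c0 w" unfolding w_def by (rule c0_sum) (auto intro: cz)
  have c0g: "c0 g" unfolding g_def by (rule c0_sum) (auto intro: cz)
  obtain D where D: "0 < D" "\<And>i. \<bar>g i\<bar> \<le> D" using c0_bounded[OF c0g] by blast
  define E where "E = {e::real. 0 \<le> e \<and> (\<forall>i. \<bar>w i + e * g i\<bar> \<le> 1)}"
  have E0: "0 \<in> E" using bd by (simp add: E_def w_def)
  have Ebd: "bdd_above E"
  proof (rule bdd_aboveI)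
    fix e assume "e \<in> E"
    hence e: "0 \<le> e" "\<bar>w i1 + e * g i1\<bar> \<le> 1" by (auto simp: E_def)
    have "\<bar>w i1\<bar> \<le> 1" using bd by (simp add: w_def)
    hence "\<bar>e * g i1\<bar> \<le> 2" using e by linarith
    hence "e * \<bar>g i1\<bar> \<le> 2" using e by (simp add: abs_mult)
    thus "e \<le> 2 / \<bar>g i1\<bar>" using i1 by (simp add: field_simps)
  qed
  have Ecl: "closed E" unfolding E_def
    by (intro closed_Collect_conj closed_Collect_all closed_Collect_le continuous_intros)
  define es where "es = Sup E"
  have esE: "es \<in> E" unfolding es_def using E0 Ebd Ecl by (intro closed_contains_Sup) auto
  define ws where "ws = (\<lambda>i. w i + es * g i)"
  have ws1: "\<bar>ws i\<bar> \<le> 1" for i using esE by (simp add: E_def ws_def)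
  have "\<exists>i0. i0 \<notin> S \<and> \<bar>ws i0\<bar> = 1"
  proof (rule ccontr)
    assume "\<not> ?thesis"
    hence lt: "\<And>i. i \<notin> S \<Longrightarrow> \<bar>ws i\<bar> < 1" using ws1 by (meson order_le_imp_less_or_eq)
    have c0ws: "c0 ws" unfolding ws_def by (intro c0_add c0_scale c0w c0g)
    define A where "A = {i. 1/2 \<le> \<bar>ws i\<bar>}"
    have fA: "finite A" using c0ws[unfolded c0_def, rule_format, of "1/2"] by (simp add: A_def)
    define \<mu> where "\<mu> = Max (insert (1/2) ((\<lambda>i. \<bar>ws i\<bar>) ` (A - S)))"
    have \<mu>1: "\<mu> < 1" unfolding \<mu>_def using fA lt by (subst Max_less_iff) auto
    have \<mu>ge: "\<bar>ws i\<bar> \<le> \<mu>" if "i \<notin> S" for i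
    proof (cases "i \<in> A")
      case True thus ?thesis unfolding \<mu>_def using fA that by (intro Max_ge) auto
    next
      case False
      have "1/2 \<le> \<mu>" unfolding \<mu>_def using fA by (intro Max_ge) auto
      thus ?thesis using False by (simp add: A_def)
    qed
    define \<delta> where "\<delta> = (1 - \<mu>) / D"
    have \<delta>0: "0 < \<delta>" using \<mu>1 D by (simp add: \<delta>_def)
    have "es + \<delta> \<in> E" unfolding E_def
    proof (intro CollectI conjI allI)
      show "0 \<le> es + \<delta>" using esE \<delta>0 by (simp add: E_def)
      fix i
      show "\<bar>w i + (es + \<delta>) * g i\<bar> \<le> 1"
      proof (cases "i \<in> S")
        case True
        hence "g i = 0" using d(2) by (simp add: g_def)
        thus ?thesis using ws1[of i] by (simp add: ws_def)
      next
        case False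
        have "\<bar>w i + (es + \<delta>) * g i\<bar> = \<bar>ws i + \<delta> * g i\<bar>" by (simp add: ws_def algebra_simps)
        also have "\<dots> \<le> \<bar>ws i\<bar> + \<delta> * \<bar>g i\<bar>" using \<delta>0 by (simp add: abs_mult abs_triangle_ineq[THEN order_trans])
        also have "\<dots> \<le> \<mu> + \<delta> * D" using \<mu>ge[OF False] D(2)[of i] \<delta>0
          by (intro add_mono mult_left_mono) auto
        also have "\<dots> = 1" using D by (simp add: \<delta>_def)
        finally show ?thesis .
      qed
    qed
    hence "es + \<delta> \<le> es" unfolding es_def using Ebd by (intro cSup_upper)
    thus False using \<delta>0 by simp
  qed
  then obtain i0 where i0: "i0 \<notin> S" "\<bar>ws i0\<bar> = 1" by blast
  define c' where "c' = (\<lambda>l. c l + es * d l)"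
  have comb: "(\<Sum>l<n. c' l * v l i) = ws i" for i
    by (simp add: c'_def ws_def w_def g_def algebra_simps sum.distrib sum_distrib_left)
  show ?thesis
  proof (intro exI[of _ c'] exI[of _ "insert i0 S"] conjI)
    show "\<forall>i. \<bar>\<Sum>l<n. c' l * v l i\<bar> \<le> 1" using ws1 by (simp add: comb)
    show "finite (insert i0 S)" using S by simp
    show "card (insert i0 S) = Suc m" using S i0 by simp
    show "\<forall>i\<in>insert i0 S. \<bar>\<Sum>l<n. c' l * v l i\<bar> = 1"
    proof
      fix i assume "i \<in> insert i0 S"
      thus "\<bar>\<Sum>l<n. c' l * v l i\<bar> = 1"
      proof
        assume "i = i0" thus ?thesis using i0 by (simp add: comb)
      next
        assume iS: "i \<in> S"
        hence "g i = 0" using d(2) by (simp add: g_def)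
        thus ?thesis using S(4) iS by (simp add: comb ws_def w_def)
      qed
    qed
  qed
qed

lemma peak:
  fixes v :: "nat \<Rightarrow> 'i \<Rightarrow> real"
  assumes indep: "\<And>c. (\<forall>i. (\<Sum>l<n. c l * v l i) = 0) \<Longrightarrow> \<forall>l<n. c l = 0"
    and cz: "\<And>l. l < n \<Longrightarrow> c0 (v l)"
  shows "\<exists>c S. (\<forall>i. \<bar>\<Sum>l<n. c l * v l i\<bar> \<le> 1) \<and> finite S \<and> card S = n
     \<and> (\<forall>i\<in>S. \<bar>\<Sum>l<n. c l * v l i\<bar> = 1)"
proof -
  have "m \<le> n \<Longrightarrow> \<exists>c S. (\<forall>i. \<bar>\<Sum>l<n. c l * v l i\<bar> \<le> 1) \<and> finite S \<and> card S = m
     \<and> (\<forall>i\<in>S. \<bar>\<Sum>l<n. c l * v l i\<bar> = 1)" for m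
  proof (induction m)
    case 0 show ?case by (intro exI[of _ "\<lambda>_. 0"] exI[of _ "{}"]) auto
  next
    case (Suc m)
    then obtain c S where "\<forall>i. \<bar>\<Sum>l<n. c l * v l i\<bar> \<le> 1" "finite S" "card S = m"
      "\<forall>i\<in>S. \<bar>\<Sum>l<n. c l * v l i\<bar> = 1" by auto
    thus ?case using peak_step[OF indep cz] Suc.prems by simp
  qed
  thus ?thesis by simp
qed


lemma lp_subsum:
  assumes "0 < P" "lp_mem (ereal P) y" "finite K"
  shows "(\<Sum>k\<in>K. \<bar>y k\<bar> powr P) \<le> lp_norm (ereal P) y powr P"
proof -
  have s: "summable (\<lambda>k. \<bar>y k\<bar> powr P)" using assms by (simp add: lp_fin)
  have S0: "0 \<le> (\<Sum>k. \<bar>y k\<bar> powr P)" by (rule suminf_nonneg[OF s]) simp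
  have "(\<Sum>k\<in>K. \<bar>y k\<bar> powr P) \<le> (\<Sum>k. \<bar>y k\<bar> powr P)"
    by (rule sum_le_suminf[OF s assms(3)]) simp
  also have "\<dots> = lp_norm (ereal P) y powr P" by (simp add: lp_fin powr_powr_inv[OF S0 assms(1)])
  finally show ?thesis .
qed

lemma card_blocks:
  fixes S :: "(nat \<times> nat) set"
  assumes "finite S" "\<And>j. j \<in> fst ` S \<Longrightarrow> real (card {k. (j, k) \<in> S}) \<le> B"
  shows "real (card S) \<le> real (card (fst ` S)) * B"
proof -
  have eq: "S = (SIGMA j:fst ` S. {k. (j, k) \<in> S})" by force
  have fin: "finite {k. (j, k) \<in> S}" for j
    using finite_imageI[OF assms(1), of snd] by (rule finite_subset[rotated]) force
  have "card S = (\<Sum>j\<in>fst ` S. card {k. (j, k) \<in> S})"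
    by (subst eq, subst card_SigmaI) (use assms(1) fin in auto)
  hence "real (card S) = (\<Sum>j\<in>fst ` S. real (card {k. (j, k) \<in> S}))" by simp
  also have "\<dots> \<le> (\<Sum>j\<in>fst ` S. B)" by (rule sum_mono) (use assms(2) in auto)
  finally show ?thesis by simp
qed

lemma mixed_term_le:
  assumes "0 < q" "0 < p" "mixed_mem q s p x"
  shows "2 powr (real j * s) * lp_norm p (x j) \<le> mixed_norm q s p x"
proof -
  have m: "lp_mem q (\<lambda>j. 2 powr (real j * s) * lp_norm p (x j))" "lp_mem p (x j)"
    using assms by (auto simp: mixed_mem_def)
  have "0 \<le> lp_norm p (x j)" by (rule lp_norm_nonneg[OF assms(2) m(2)])
  thus ?thesis using lp_le_norm[OF assms(1) m(1), of j] by (simp add: mixed_norm_def)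
qed

lemma mixed_entry_le:
  assumes "0 < p" "mixed_mem q s p x"
  shows "\<bar>x j k\<bar> \<le> lp_norm p (x j)"
  using lp_le_norm[OF assms(1)] assms(2) by (auto simp: mixed_mem_def)

lemma mixed_nonneg:
  assumes "0 < q" "mixed_mem q s p x"
  shows "0 \<le> mixed_norm q s p x"
  using lp_norm_nonneg[OF assms(1)] assms(2) by (auto simp: mixed_mem_def mixed_norm_def)

lemma mixed_homog:
  assumes "0 < q" "0 < p" "mixed_mem q s p x"
  shows "mixed_mem q s p (\<lambda>j k. c * x j k) \<and> mixed_norm q s p (\<lambda>j k. c * x j k) = \<bar>c\<bar> * mixed_norm q s p x"
proof -
  have h: "lp_mem p (\<lambda>k. c * x j k) \<and> lp_norm p (\<lambda>k. c * x j k) = \<bar>c\<bar> * lp_norm p (x j)" for j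
    using lp_homog[OF assms(2)] assms(3) by (auto simp: mixed_mem_def)
  have o: "lp_mem q (\<lambda>j. 2 powr (real j * s) * lp_norm p (x j))" using assms by (simp add: mixed_mem_def)
  have eq: "(\<lambda>j. 2 powr (real j * s) * lp_norm p (\<lambda>k. c * x j k)) = (\<lambda>j. \<bar>c\<bar> * (2 powr (real j * s) * lp_norm p (x j)))"
    using h by (auto simp: algebra_simps)
  have "lp_mem q (\<lambda>j. \<bar>c\<bar> * (2 powr (real j * s) * lp_norm p (x j))) \<and>
    lp_norm q (\<lambda>j. \<bar>c\<bar> * (2 powr (real j * s) * lp_norm p (x j))) = \<bar>\<bar>c\<bar>\<bar> * lp_norm q (\<lambda>j. 2 powr (real j * s) * lp_norm p (x j))"
    by (rule lp_homog[OF assms(1) o])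
  thus ?thesis unfolding mixed_mem_def mixed_norm_def eq using h by simp
qed

lemma mixed_pos:
  assumes "0 < q" "0 < p" "mixed_mem q s p x" "x j k \<noteq> 0"
  shows "0 < mixed_norm q s p x"
proof -
  have "0 < lp_norm p (x j)" using mixed_entry_le[OF assms(2,3), of j k] assms(4) by simp
  hence "0 < 2 powr (real j * s) * lp_norm p (x j)" by simp
  thus ?thesis using mixed_term_le[OF assms(1-3), of j] by linarith
qed

lemma embedding:
  assumes "t \<le> s" "0 < p0" "p0 < p1" "0 < q0" "0 < q1" "t < s \<or> q0 < q1"
  shows "mixed_space q0 s p0 \<subseteq> mixed_space q1 t p1"
proof
  fix x assume "x \<in> mixed_space q0 s p0"
  hence xm: "mixed_mem q0 s p0 x" by (simp add: mixed_space_def)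
  obtain P0 where P0: "p0 = ereal P0" "0 < P0" using assms(2,3) by (cases p0) auto
  have p1pos: "0 < p1" using assms(2,3) by simp
  have inc: "lp_mem p1 (x j) \<and> lp_norm p1 (x j) \<le> lp_norm p0 (x j)" for j
    using lp_incl[of P0 p1 "x j"] P0 assms(3) xm by (auto simp: mixed_mem_def)
  have bnon: "0 \<le> lp_norm p1 (x j)" for j using lp_norm_nonneg[OF p1pos] inc by blast
  have "lp_mem q1 (\<lambda>j. 2 powr (real j * t) * lp_norm p1 (x j))"
    using assms(6)
  proof
    assume ts: "t < s"
    define X where "X = mixed_norm q0 s p0 x"
    have g: "lp_mem q1 (\<lambda>j. X * 2 powr (- (real j * (s - t))))"
      using lp_homog[OF assms(5) lp_geom[OF assms(5), of "s - t"]] ts by auto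
    have "\<bar>2 powr (real j * t) * lp_norm p1 (x j)\<bar> \<le> \<bar>X * 2 powr (- (real j * (s - t)))\<bar>" for j
    proof -
      have "2 powr (real j * t) * lp_norm p1 (x j) \<le> 2 powr (real j * t) * lp_norm p0 (x j)"
        using inc[of j] by simp
      also have "\<dots> = 2 powr (- (real j * (s - t))) * (2 powr (real j * s) * lp_norm p0 (x j))"
        by (simp add: algebra_simps flip: powr_add)
      also have "\<dots> \<le> 2 powr (- (real j * (s - t))) * X"
        unfolding X_def using mixed_term_le[OF assms(4,2) xm] by (intro mult_left_mono) auto
      finally have "2 powr (real j * t) * lp_norm p1 (x j) \<le> 2 powr (- (real j * (s - t))) * X" .
      moreover have "0 \<le> X" unfolding X_def by (rule mixed_nonneg[OF assms(4) xm])
      ultimately show ?thesis using bnon[of j] by (simp add: abs_mult algebra_simps)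
    qed
    thus ?thesis using lp_mono[OF assms(5) g, of "\<lambda>j. 2 powr (real j * t) * lp_norm p1 (x j)"] by blast
  next
    assume qq: "q0 < q1"
    obtain Q0 where Q0: "q0 = ereal Q0" "0 < Q0" using assms(4) qq by (cases q0) auto
    have a: "lp_mem q0 (\<lambda>j. 2 powr (real j * s) * lp_norm p0 (x j))" using xm by (simp add: mixed_mem_def)
    have a1: "lp_mem q1 (\<lambda>j. 2 powr (real j * s) * lp_norm p0 (x j))"
      using lp_incl[of Q0 q1] a Q0 qq by auto
    have "\<bar>2 powr (real j * t) * lp_norm p1 (x j)\<bar> \<le> \<bar>2 powr (real j * s) * lp_norm p0 (x j)\<bar>" for j
    proof -
      have "2 powr (real j * t) * lp_norm p1 (x j) \<le> 2 powr (real j * s) * lp_norm p0 (x j)"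
        using inc[of j] bnon[of j] assms(1) by (intro mult_mono) (auto intro: mult_left_mono)
      thus ?thesis using bnon[of j] by simp
    qed
    thus ?thesis using lp_mono[OF assms(5) a1, of "\<lambda>j. 2 powr (real j * t) * lp_norm p1 (x j)"] by blast
  qed
  thus "x \<in> mixed_space q1 t p1" using inc by (simp add: mixed_space_def mixed_mem_def)
qed


lemma w_le: "\<bar>2 powr a * (y::real)\<bar> \<le> 1 \<longleftrightarrow> \<bar>y\<bar> \<le> 2 powr (- a)"
  by (simp add: abs_mult powr_minus_divide field_simps)

lemma w_eq: "\<bar>2 powr a * (y::real)\<bar> = 1 \<longleftrightarrow> \<bar>y\<bar> = 2 powr (- a)"
  by (simp add: abs_mult powr_minus_divide field_simps)

lemma estA:
  fixes j :: real
  assumes "0 \<le> j" "0 \<le> \<theta>" "0 \<le> a" "a \<le> 2 powr (-(j * s)) * X" "0 \<le> X" "\<sigma> \<le> s"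
  shows "2 powr (j * t) * ((2 powr (-(j * \<sigma>))) powr (1-\<theta>) * a powr \<theta>) \<le> 2 powr (-(j * (\<sigma> - t))) * X powr \<theta>"
proof -
  have "a powr \<theta> \<le> (2 powr (-(j * s)) * X) powr \<theta>" using assms by (intro powr_mono2) auto
  also have "\<dots> = 2 powr (-(j * s) * \<theta>) * X powr \<theta>" using assms by (simp add: powr_mult powr_powr)
  finally have a1: "a powr \<theta> \<le> 2 powr (-(j * s) * \<theta>) * X powr \<theta>" .
  have "2 powr (j * t) * ((2 powr (-(j * \<sigma>))) powr (1-\<theta>) * a powr \<theta>)
      \<le> 2 powr (j * t) * ((2 powr (-(j * \<sigma>))) powr (1-\<theta>) * (2 powr (-(j * s) * \<theta>) * X powr \<theta>))"
    using a1 by (intro mult_left_mono) auto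
  also have "\<dots> = 2 powr (j * t + (-(j * \<sigma>)) * (1-\<theta>) + (-(j * s) * \<theta>)) * X powr \<theta>"
    unfolding powr_add by (simp add: powr_powr mult.assoc)
  also have "\<dots> \<le> 2 powr (-(j * (\<sigma> - t))) * X powr \<theta>"
  proof (intro mult_right_mono powr_mono)
    have "j * \<theta> * (\<sigma> - s) \<le> 0" using assms by (intro mult_nonneg_nonpos) auto
    thus "j * t + (-(j * \<sigma>)) * (1-\<theta>) + (-(j * s) * \<theta>) \<le> -(j * (\<sigma> - t))" by (simp add: algebra_simps)
  qed auto
  finally show ?thesis .
qed

lemma ceil_card:
  assumes "0 \<le> L" "\<And>j. j \<in> J \<Longrightarrow> real j \<le> L"
  shows "real (card J) \<le> L + 1"
proof -
  have "J \<subseteq> {..nat \<lfloor>L\<rfloor>}"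
  proof
    fix j assume "j \<in> J"
    hence "real j \<le> L" by (rule assms(2))
    hence "int j \<le> \<lfloor>L\<rfloor>" by (simp add: le_floor_iff)
    thus "j \<in> {..nat \<lfloor>L\<rfloor>}" by simp
  qed
  hence "card J \<le> card {..nat \<lfloor>L\<rfloor>}" by (intro card_mono) auto
  hence "card J \<le> nat \<lfloor>L\<rfloor> + 1" by simp
  moreover have "real (nat \<lfloor>L\<rfloor>) \<le> L" using assms(1) by linarith
  ultimately show ?thesis by linarith
qed

definition peaks :: "(nat \<Rightarrow> real) \<Rightarrow> dseq \<Rightarrow> nat \<Rightarrow> bool" where
  "peaks w x n \<longleftrightarrow> (\<forall>j k. \<bar>w j * x j k\<bar> \<le> 1) \<and>
     (\<exists>S. finite S \<and> card S = n \<and> (\<forall>(j, k)\<in>S. \<bar>w j * x j k\<bar> = 1))"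

definition good :: "ereal \<Rightarrow> real \<Rightarrow> ereal \<Rightarrow> ereal \<Rightarrow> real \<Rightarrow> ereal \<Rightarrow> (nat \<Rightarrow> real) \<Rightarrow> bool" where
  "good q0 s p0 q1 t p1 w \<longleftrightarrow> (\<forall>j. 0 < w j) \<and>
     (\<forall>x. mixed_mem q0 s p0 x \<longrightarrow> c0 (\<lambda>(j, k). w j * x j k)) \<and>
     (\<exists>C L. 0 < C \<and> L < 1 \<and> (\<forall>x. mixed_mem q0 s p0 x \<longrightarrow> (\<forall>j k. \<bar>w j * x j k\<bar> \<le> 1) \<longrightarrow>
        0 < mixed_norm q0 s p0 x \<longrightarrow> mixed_norm q1 t p1 x \<le> C * mixed_norm q0 s p0 x powr L)) \<and>
     (\<forall>R. \<exists>N. \<forall>n\<ge>N. \<forall>x. mixed_mem q0 s p0 x \<longrightarrow> peaks w x n \<longrightarrow> R < mixed_norm q0 s p0 x)"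

lemma alpha_bound:
  assumes "0 < q0" "0 < p0" "mixed_mem q0 s p0 x"
  shows "lp_norm p0 (x j) \<le> 2 powr (- (real j * s)) * mixed_norm q0 s p0 x"
proof -
  have "2 powr (real j * s) * lp_norm p0 (x j) \<le> mixed_norm q0 s p0 x" by (rule mixed_term_le[OF assms])
  hence "2 powr (- (real j * s)) * (2 powr (real j * s) * lp_norm p0 (x j)) \<le> 2 powr (- (real j * s)) * mixed_norm q0 s p0 x"
    by (intro mult_left_mono) auto
  thus ?thesis by (simp add: mult.assoc[symmetric] flip: powr_add)
qed

lemma goodA:
  assumes "t < s" "0 < p0" "p0 < p1" "0 < q0" "0 < q1"
  shows "good q0 s p0 q1 t p1 (\<lambda>j. 2 powr (real j * ((s + t) / 2)))"
proof -
  define \<sigma> where "\<sigma> = (s + t) / 2"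
  define \<delta> where "\<delta> = (s - t) / 2"
  have \<delta>0: "0 < \<delta>" using assms by (simp add: \<delta>_def)
  have \<sigma>s: "\<sigma> \<le> s" "s - \<sigma> = \<delta>" "\<sigma> - t = \<delta>" using assms by (simp_all add: \<sigma>_def \<delta>_def field_simps)
  obtain P0 where P0: "p0 = ereal P0" "0 < P0" using assms(2,3) by (cases p0) auto
  define w where "w = (\<lambda>j. 2 powr (real j * \<sigma>))"
  define m where "m = (\<lambda>j. 2 powr (- (real j * \<sigma>)))"
  have wm: "\<bar>w j * y\<bar> \<le> 1 \<longleftrightarrow> \<bar>y\<bar> \<le> m j" "\<bar>w j * y\<bar> = 1 \<longleftrightarrow> \<bar>y\<bar> = m j" for j y
    by (simp_all add: w_def m_def w_le w_eq)
  have p1pos: "0 < p1" using assms by simp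
  have xj: "lp_mem p0 (x j)" if "mixed_mem q0 s p0 x" for x j using that by (simp add: mixed_mem_def)
  have xj1: "lp_mem p1 (x j) \<and> lp_norm p1 (x j) \<le> lp_norm p0 (x j)" if "mixed_mem q0 s p0 x" for x j
    using lp_incl[of P0 p1 "x j"] P0 assms(3) xj[OF that] by auto
  have C0: "c0 (\<lambda>(j, k). w j * x j k)" if xm: "mixed_mem q0 s p0 x" for x
    unfolding c0_def
  proof (intro allI impI)
    fix e :: real assume e: "0 < e"
    define X where "X = mixed_norm q0 s p0 x"
    have X0: "0 \<le> X" unfolding X_def by (rule mixed_nonneg[OF assms(4) xm])
    define g where "g = (\<lambda>j. 2 powr (- (real j * \<delta>)))"
    have gm: "lp_mem (ereal 1) g" unfolding g_def by (rule lp_geom) (use \<delta>0 in auto)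
    define e' where "e' = e / (X + 1)"
    have e'0: "0 < e'" using e X0 by (simp add: e'_def)
    have fJ: "finite {j. e' \<le> \<bar>g j\<bar>}" by (rule lp_c0[OF _ gm e'0]) simp
    have fK: "finite {k. e * m j \<le> \<bar>x j k\<bar>}" for j
      by (rule lp_c0[of P0]) (use P0 xj[OF xm] e in \<open>auto simp: m_def\<close>)
    have sub: "{i. e \<le> \<bar>(case i of (j, k) \<Rightarrow> w j * x j k)\<bar>} \<subseteq>
      (SIGMA j:{j. e' \<le> \<bar>g j\<bar>}. {k. e * m j \<le> \<bar>x j k\<bar>})"
    proof (clarify)
      fix j k assume a: "e \<le> \<bar>w j * x j k\<bar>"
      have wxm: "\<bar>w j * x j k\<bar> = \<bar>x j k\<bar> / m j"
        by (simp add: w_def m_def abs_mult powr_minus_divide)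
      have mpos: "0 < m j" by (simp add: m_def)
      have 1: "e * m j \<le> \<bar>x j k\<bar>" using a mpos by (simp add: wxm field_simps)
      have "\<bar>x j k\<bar> \<le> lp_norm p0 (x j)" by (rule mixed_entry_le[OF assms(2) xm])
      also have "\<dots> \<le> 2 powr (- (real j * s)) * X" unfolding X_def by (rule alpha_bound[OF assms(4,2) xm])
      finally have "e * m j \<le> 2 powr (- (real j * s)) * X" using 1 by linarith
      hence "e \<le> 2 powr (- (real j * s)) * X / m j" using mpos by (simp add: field_simps)
      also have "2 powr (- (real j * s)) * X / m j = g j * X"
        by (simp add: m_def g_def powr_minus_divide field_simps \<sigma>s(2)[symmetric] flip: powr_add)
      also have "\<dots> \<le> g j * (X + 1)" by (simp add: g_def)
      finally have "e' \<le> g j" using X0 by (simp add: e'_def field_simps)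
      thus "j \<in> {j. e' \<le> \<bar>g j\<bar>} \<and> k \<in> {k. e * m j \<le> \<bar>x j k\<bar>}" using 1 by (simp add: g_def)
    qed
    show "finite {i. e \<le> \<bar>(case i of (j, k) \<Rightarrow> w j * x j k)\<bar>}"
      by (rule finite_subset[OF sub]) (use fJ fK in auto)
  qed
  define \<theta> where "\<theta> = (if p1 = \<infinity> then 0 else P0 / real_of_ereal p1)"
  have \<theta>: "0 \<le> \<theta>" "\<theta> < 1"
  proof -
    show "0 \<le> \<theta>" using P0 assms(3) by (cases p1) (auto simp: \<theta>_def)
    show "\<theta> < 1" using P0 assms(3) by (cases p1) (auto simp: \<theta>_def)
  qed
  define g where "g = (\<lambda>j. 2 powr (- (real j * \<delta>)))"
  have gm: "lp_mem q1 g" unfolding g_def by (rule lp_geom[OF assms(5) \<delta>0])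
  define C where "C = lp_norm q1 g"
  have C1: "1 \<le> C" using lp_le_norm[OF assms(5) gm, of 0] by (simp add: C_def g_def)
  have YB: "mixed_norm q1 t p1 x \<le> C * mixed_norm q0 s p0 x powr \<theta>"
    if xm: "mixed_mem q0 s p0 x" and bd: "\<forall>j k. \<bar>w j * x j k\<bar> \<le> 1" and Xp: "0 < mixed_norm q0 s p0 x" for x
  proof -
    define X where "X = mixed_norm q0 s p0 x"
    have X0: "0 < X" using Xp by (simp add: X_def)
    have ent: "\<bar>x j k\<bar> \<le> m j" for j k using bd wm by blast
    have al: "lp_norm p0 (x j) \<le> 2 powr (- (real j * s)) * X" for j
      unfolding X_def by (rule alpha_bound[OF assms(4,2) xm])
    have bj: "2 powr (real j * t) * lp_norm p1 (x j) \<le> X powr \<theta> * g j" for j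
    proof (cases "p1 = \<infinity>")
      case True
      have "lp_norm p1 (x j) = (SUP k. \<bar>x j k\<bar>)" using True by (simp add: lp_inf)
      also have "\<dots> \<le> m j" by (rule cSUP_least) (use ent in auto)
      finally have "2 powr (real j * t) * lp_norm p1 (x j) \<le> 2 powr (real j * t) * m j"
        by (intro mult_left_mono) auto
      also have "\<dots> = 2 powr (real j * t + - (real j * \<sigma>))" unfolding m_def powr_add by (rule refl)
      also have "real j * t + - (real j * \<sigma>) = - (real j * \<delta>)"
        by (simp add: \<sigma>s(3)[symmetric] right_diff_distrib)
      also have "2 powr (- (real j * \<delta>)) = g j" by (simp add: g_def)
      finally show ?thesis using True X0 by (simp add: \<theta>_def)
    next
      case False
      obtain R where R: "p1 = ereal R" using False assms(3) by (cases p1) auto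
      have "lp_norm p1 (x j) \<le> m j powr (1 - P0 / real_of_ereal p1) * lp_norm (ereal P0) (x j) powr (P0 / real_of_ereal p1)"
        using lp_interp[OF P0(2) _ _ ent False] P0 assms(3) xj[OF xm] by auto
      hence "2 powr (real j * t) * lp_norm p1 (x j) \<le> 2 powr (real j * t) * (m j powr (1 - \<theta>) * lp_norm p0 (x j) powr \<theta>)"
        using False P0 by (intro mult_left_mono) (auto simp: \<theta>_def)
      also have "\<dots> \<le> 2 powr (- (real j * (\<sigma> - t))) * X powr \<theta>"
        unfolding m_def using \<theta> X0 al[of j] \<sigma>s lp_norm_nonneg[OF assms(2) xj[OF xm]]
        by (intro estA) auto
      finally show ?thesis by (simp add: g_def \<sigma>s(3) mult.commute)
    qed
    have gX: "lp_mem q1 (\<lambda>j. X powr \<theta> * g j) \<and> lp_norm q1 (\<lambda>j. X powr \<theta> * g j) = \<bar>X powr \<theta>\<bar> * C"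
      unfolding C_def by (rule lp_homog[OF assms(5) gm])
    have "\<bar>2 powr (real j * t) * lp_norm p1 (x j)\<bar> \<le> \<bar>X powr \<theta> * g j\<bar>" for j
      using bj[of j] lp_norm_nonneg[OF p1pos, of "x j"] xj1[OF xm, of j] by (simp add: g_def)
    hence "lp_norm q1 (\<lambda>j. 2 powr (real j * t) * lp_norm p1 (x j)) \<le> lp_norm q1 (\<lambda>j. X powr \<theta> * g j)"
      using lp_mono[OF assms(5), of "\<lambda>j. X powr \<theta> * g j" "\<lambda>j. 2 powr (real j * t) * lp_norm p1 (x j)"] gX by blast
    thus ?thesis using gX by (simp add: mixed_norm_def X_def mult.commute)
  qed
  have LB: "\<exists>N. \<forall>n\<ge>N. \<forall>x. mixed_mem q0 s p0 x \<longrightarrow> peaks w x n \<longrightarrow> R0 < mixed_norm q0 s p0 x" for R0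
  proof -
    define R' where "R' = max R0 1"
    define N where "N = nat \<lceil>(log 2 R' / \<delta> + 1) * R' powr P0\<rceil> + 1"
    show ?thesis
    proof (intro exI[of _ N] allI impI)
      fix n x assume nN: "N \<le> n" and xm: "mixed_mem q0 s p0 x" and pk: "peaks w x n"
      define X where "X = mixed_norm q0 s p0 x"
      show "R0 < mixed_norm q0 s p0 x"
      proof (rule ccontr)
        assume "\<not> ?thesis"
        hence XR: "X \<le> R'" by (simp add: X_def R'_def)
        obtain S where S: "finite S" "card S = n" "\<forall>(j, k)\<in>S. \<bar>w j * x j k\<bar> = 1"
          using pk by (auto simp: peaks_def)
        have n1: "1 \<le> n" using nN by (simp add: N_def)
        hence Sne: "S \<noteq> {}" using S by auto
        have pe: "\<bar>x j k\<bar> = m j" if "(j, k) \<in> S" for j k using S(3) that wm by blast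
        have al: "lp_norm p0 (x j) \<le> 2 powr (- (real j * s)) * X" for j
          unfolding X_def by (rule alpha_bound[OF assms(4,2) xm])
        have c1: "2 powr (real j * \<delta>) \<le> X" if jS: "j \<in> fst ` S" for j
        proof -
          obtain k where jk: "(j, k) \<in> S" using jS by force
          have "m j \<le> 2 powr (- (real j * s)) * X"
            using pe[OF jk] mixed_entry_le[OF assms(2) xm, of j k] al[of j] by linarith
          hence "2 powr (real j * s) * m j \<le> 2 powr (real j * s) * (2 powr (- (real j * s)) * X)"
            by (intro mult_left_mono) auto
          moreover have "2 powr (real j * s) * m j = 2 powr (real j * \<delta>)"
          proof -
            have "2 powr (real j * s) * m j = 2 powr (real j * s + - (real j * \<sigma>))" unfolding m_def powr_add by (rule refl)
            also have "real j * s + - (real j * \<sigma>) = real j * \<delta>"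
              by (simp add: \<sigma>s(2)[symmetric] right_diff_distrib)
            finally show ?thesis .
          qed
          moreover have "2 powr (real j * s) * (2 powr (- (real j * s)) * X) = X"
            by (simp add: mult.assoc[symmetric] flip: powr_add)
          ultimately show ?thesis by simp
        qed
        have X1: "1 \<le> X"
        proof -
          obtain j where "j \<in> fst ` S" using Sne by auto
          moreover have "1 \<le> 2 powr (real j * \<delta>)" using \<delta>0 by (intro ge_one_powr_ge_zero) auto
          ultimately show ?thesis using c1 by force
        qed
        have c2: "real j \<le> log 2 X / \<delta>" if "j \<in> fst ` S" for j
        proof -
          have "log 2 (2 powr (real j * \<delta>)) \<le> log 2 X"
            using c1[OF that] by (intro log_mono) auto
          hence "real j * \<delta> \<le> log 2 X" by simp
          thus ?thesis using \<delta>0 by (simp add: field_simps)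
        qed
        have cb: "real (card (fst ` S)) \<le> log 2 X / \<delta> + 1"
          by (rule ceil_card) (use X1 \<delta>0 c2 in auto)
        have c3: "real (card {k. (j, k) \<in> S}) \<le> X powr P0" for j
        proof -
          define K where "K = {k. (j, k) \<in> S}"
          have fK: "finite K" unfolding K_def
            using finite_imageI[OF S(1), of snd] by (rule finite_subset[rotated]) force
          have E: "(\<Sum>k\<in>K. \<bar>x j k\<bar> powr P0) = real (card K) * m j powr P0"
            using pe by (simp add: K_def)
          have "(\<Sum>k\<in>K. \<bar>x j k\<bar> powr P0) \<le> lp_norm p0 (x j) powr P0"
            using lp_subsum[OF P0(2) _ fK, of "x j"] xj[OF xm] P0 by simp
          also have "\<dots> \<le> (2 powr (- (real j * s)) * X) powr P0"
            using al[of j] P0 lp_norm_nonneg[OF assms(2) xj[OF xm]] by (intro powr_mono2) auto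
          also have "\<dots> = (2 powr (- (real j * s))) powr P0 * X powr P0"
            using X1 by (simp add: powr_mult)
          finally have A: "real (card K) * m j powr P0 \<le> (2 powr (- (real j * s))) powr P0 * X powr P0"
            unfolding E .
          have "(2 powr (- (real j * s))) powr P0 \<le> m j powr P0"
            unfolding m_def using \<sigma>s P0 by (intro powr_mono2 powr_mono) (auto intro: mult_left_mono)
          hence "real (card K) * (2 powr (- (real j * s))) powr P0 \<le> real (card K) * m j powr P0"
            by (intro mult_left_mono) auto
          hence "real (card K) * (2 powr (- (real j * s))) powr P0 \<le> X powr P0 * (2 powr (- (real j * s))) powr P0"
            using A by (simp only: mult.commute)
          hence "real (card K) \<le> X powr P0" by (rule mult_right_le_imp_le) simp
          thus ?thesis unfolding K_def by simp
        qed
        have "real n \<le> real (card (fst ` S)) * X powr P0"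
          using card_blocks[OF S(1), of "X powr P0"] c3 S(2) by simp
        also have "\<dots> \<le> (log 2 X / \<delta> + 1) * X powr P0"
          by (intro mult_right_mono cb) auto
        also have "\<dots> \<le> (log 2 R' / \<delta> + 1) * R' powr P0"
        proof (intro mult_mono)
          show "log 2 X / \<delta> + 1 \<le> log 2 R' / \<delta> + 1"
            using X1 XR \<delta>0 by (auto intro!: divide_right_mono log_mono)
          show "X powr P0 \<le> R' powr P0" using X1 XR P0 by (intro powr_mono2) auto
          show "0 \<le> log 2 R' / \<delta> + 1" using X1 XR \<delta>0 by (auto intro!: add_nonneg_nonneg divide_nonneg_pos)
        qed auto
        also have "\<dots> < real N" unfolding N_def by linarith
        finally show False using nN by simp
      qed
    qed
  qed
  show ?thesis
    unfolding good_def
  proof (intro conjI allI impI)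
    show "0 < 2 powr (real j * ((s + t) / 2))" for j by simp
    show "c0 (\<lambda>(j, k). 2 powr (real j * ((s + t) / 2)) * x j k)" if "mixed_mem q0 s p0 x" for x
      using C0[OF that] by (simp add: w_def \<sigma>_def)
    show "\<exists>C L. 0 < C \<and> L < 1 \<and> (\<forall>x. mixed_mem q0 s p0 x \<longrightarrow> (\<forall>j k. \<bar>2 powr (real j * ((s + t) / 2)) * x j k\<bar> \<le> 1) \<longrightarrow>
        0 < mixed_norm q0 s p0 x \<longrightarrow> mixed_norm q1 t p1 x \<le> C * mixed_norm q0 s p0 x powr L)"
      using YB C1 \<theta> by (intro exI[of _ C] exI[of _ \<theta>]) (auto simp: w_def \<sigma>_def)
    show "\<exists>N. \<forall>n\<ge>N. \<forall>x. mixed_mem q0 s p0 x \<longrightarrow> peaks (\<lambda>j. 2 powr (real j * ((s + t) / 2))) x n \<longrightarrow> R < mixed_norm q0 s p0 x" for R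
      using LB[of R] by (simp add: w_def \<sigma>_def)
  qed
qed


lemma lp_pow:
  assumes "0 < Q" "lp_mem (ereal Q) a" "\<And>j. 0 \<le> a j" "0 < L" "L \<le> 1"
    and "r = \<infinity> \<or> (\<exists>R. r = ereal R \<and> Q \<le> L * R)"
  shows "lp_mem r (\<lambda>j. a j powr L) \<and> lp_norm r (\<lambda>j. a j powr L) \<le> lp_norm (ereal Q) a powr L"
  using assms(6)
proof
  assume r: "r = \<infinity>"
  have "a j powr L \<le> lp_norm (ereal Q) a powr L" for j
    using lp_le_norm[OF _ assms(2), of j] assms by (intro powr_mono2) auto
  hence b: "\<bar>a j powr L\<bar> \<le> lp_norm (ereal Q) a powr L" for j by simp
  hence "bdd_above (range (\<lambda>j. \<bar>a j powr L\<bar>))" by (auto simp: bdd_above_def)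
  moreover have "(SUP j. \<bar>a j powr L\<bar>) \<le> lp_norm (ereal Q) a powr L" by (rule cSUP_least) (use b in auto)
  ultimately show ?thesis using r by (simp add: lp_inf)
next
  assume "\<exists>R. r = ereal R \<and> Q \<le> L * R"
  then obtain R where R: "r = ereal R" "Q \<le> L * R" by blast
  have R0: "0 < R" using R assms by (metis mult_pos_pos not_less order_less_le_trans zero_less_mult_pos)
  have inc: "lp_mem (ereal (L * R)) a \<and> lp_norm (ereal (L * R)) a \<le> lp_norm (ereal Q) a"
    by (rule lp_incl[OF assms(1) _ assms(2)]) (use R in simp)
  have eq: "\<bar>a j powr L\<bar> powr R = \<bar>a j\<bar> powr (L * R)" for j
    using assms(3)[of j] by (simp add: powr_powr)
  have eqf: "(\<lambda>j. \<bar>a j powr L\<bar> powr R) = (\<lambda>j. \<bar>a j\<bar> powr (L * R))" using eq by auto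
  have s: "summable (\<lambda>j. \<bar>a j\<bar> powr (L * R))" using inc by (simp add: lp_fin)
  have S0: "0 \<le> (\<Sum>j. \<bar>a j\<bar> powr (L * R))" by (rule suminf_nonneg[OF s]) simp
  have "lp_norm r (\<lambda>j. a j powr L) = (\<Sum>j. \<bar>a j\<bar> powr (L * R)) powr (1 / R)"
    unfolding R(1) lp_fin eqf ..
  also have "\<dots> = ((\<Sum>j. \<bar>a j\<bar> powr (L * R)) powr (1 / (L * R))) powr L"
    using assms(4) by (simp add: powr_powr)
  also have "\<dots> \<le> lp_norm (ereal Q) a powr L"
    using inc assms(4) S0 by (intro powr_mono2) (auto simp: lp_fin)
  moreover have "lp_mem r (\<lambda>j. a j powr L)" unfolding R(1) lp_fin eqf by (rule s)
  ultimately show ?thesis by simp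
qed

lemma estB:
  fixes j :: real
  assumes "0 \<le> \<theta>" "0 \<le> a"
  shows "2 powr (j * s) * ((2 powr (- (j * s))) powr (1 - \<theta>) * a powr \<theta>) = (2 powr (j * s) * a) powr \<theta>"
proof -
  have "2 powr (j * s) * (2 powr (- (j * s))) powr (1 - \<theta>) = 2 powr (j * s + (- (j * s)) * (1 - \<theta>))"
    unfolding powr_add by (simp add: powr_powr)
  also have "j * s + (- (j * s)) * (1 - \<theta>) = (j * s) * \<theta>" by (simp add: algebra_simps)
  finally have 1: "2 powr (j * s) * (2 powr (- (j * s))) powr (1 - \<theta>) = (2 powr (j * s)) powr \<theta>"
    by (simp add: powr_powr)
  have "2 powr (j * s) * ((2 powr (- (j * s))) powr (1 - \<theta>) * a powr \<theta>) = (2 powr (j * s) * (2 powr (- (j * s))) powr (1 - \<theta>)) * a powr \<theta>"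
    by (simp add: mult.assoc)
  also have "\<dots> = (2 powr (j * s) * a) powr \<theta>" unfolding 1 using assms by (simp add: powr_mult)
  finally show ?thesis .
qed

lemma goodB:
  assumes "0 < p0" "p0 < p1" "0 < q0" "q0 < q1"
  shows "good q0 s p0 q1 s p1 (\<lambda>j. 2 powr (real j * s))"
proof -
  obtain P0 where P0: "p0 = ereal P0" "0 < P0" using assms(1,2) by (cases p0) auto
  obtain Q0 where Q0: "q0 = ereal Q0" "0 < Q0" using assms(3,4) by (cases q0) auto
  have q1pos: "0 < q1" using assms by simp
  have p1pos: "0 < p1" using assms by simp
  define w where "w = (\<lambda>j::nat. 2 powr (real j * s))"
  define m where "m = (\<lambda>j::nat. 2 powr (- (real j * s)))"
  have wm: "\<bar>w j * y\<bar> \<le> 1 \<longleftrightarrow> \<bar>y\<bar> \<le> m j" "\<bar>w j * y\<bar> = 1 \<longleftrightarrow> \<bar>y\<bar> = m j" for j y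
    by (simp_all add: w_def m_def w_le w_eq)
  have xj: "lp_mem p0 (x j)" if "mixed_mem q0 s p0 x" for x j using that by (simp add: mixed_mem_def)
  have xj1: "lp_mem p1 (x j) \<and> lp_norm p1 (x j) \<le> lp_norm p0 (x j)" if "mixed_mem q0 s p0 x" for x j
    using lp_incl[of P0 p1 "x j"] P0 assms(2) xj[OF that] by auto
  have am: "lp_mem q0 (\<lambda>j. 2 powr (real j * s) * lp_norm p0 (x j))" if "mixed_mem q0 s p0 x" for x
    using that by (simp add: mixed_mem_def)
  have anon: "0 \<le> 2 powr (real j * s) * lp_norm p0 (x j)" if "mixed_mem q0 s p0 x" for x j
    using lp_norm_nonneg[OF assms(1) xj[OF that]] by simp
  have C0: "c0 (\<lambda>(j, k). w j * x j k)" if xm: "mixed_mem q0 s p0 x" for x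
    unfolding c0_def
  proof (intro allI impI)
    fix e :: real assume e: "0 < e"
    define a where "a = (\<lambda>j. 2 powr (real j * s) * lp_norm p0 (x j))"
    have fJ: "finite {j. e \<le> \<bar>a j\<bar>}" unfolding a_def by (rule lp_c0[OF Q0(2) _ e]) (use am[OF xm] Q0 in simp)
    have fK: "finite {k. e * m j \<le> \<bar>x j k\<bar>}" for j
      by (rule lp_c0[of P0]) (use P0 xj[OF xm] e in \<open>auto simp: m_def\<close>)
    have sub: "{i. e \<le> \<bar>(case i of (j, k) \<Rightarrow> w j * x j k)\<bar>} \<subseteq>
      (SIGMA j:{j. e \<le> \<bar>a j\<bar>}. {k. e * m j \<le> \<bar>x j k\<bar>})"
    proof (clarify)
      fix j k assume a: "e \<le> \<bar>w j * x j k\<bar>"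
      have wxm: "\<bar>w j * x j k\<bar> = \<bar>x j k\<bar> / m j"
        by (simp add: w_def m_def abs_mult powr_minus_divide)
      have mpos: "0 < m j" by (simp add: m_def)
      have 1: "e * m j \<le> \<bar>x j k\<bar>" using a mpos by (simp add: wxm field_simps)
      have "\<bar>w j * x j k\<bar> \<le> w j * lp_norm p0 (x j)"
        using mixed_entry_le[OF assms(1) xm, of j k] by (simp add: abs_mult w_def mult_left_mono)
      hence "e \<le> a j" using a by (simp add: a_def w_def)
      thus "j \<in> {j. e \<le> \<bar>a j\<bar>} \<and> k \<in> {k. e * m j \<le> \<bar>x j k\<bar>}" using 1 by simp
    qed
    show "finite {i. e \<le> \<bar>(case i of (j, k) \<Rightarrow> w j * x j k)\<bar>}"
      by (rule finite_subset[OF sub]) (use fJ fK in auto)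
  qed
  define \<theta> where "\<theta> = (if p1 = \<infinity> then 0 else P0 / real_of_ereal p1)"
  have \<theta>: "0 \<le> \<theta>" "\<theta> < 1"
  proof -
    show "0 \<le> \<theta>" using P0 assms(2) by (cases p1) (auto simp: \<theta>_def)
    show "\<theta> < 1" using P0 assms(2) by (cases p1) (auto simp: \<theta>_def)
  qed
  define \<rho> where "\<rho> = (if q1 = \<infinity> then 0 else Q0 / real_of_ereal q1)"
  have \<rho>: "\<rho> < 1" using Q0 assms(4) by (cases q1) (auto simp: \<rho>_def)
  define \<Lambda> where "\<Lambda> = max (1/2) (max \<theta> \<rho>)"
  have \<Lambda>: "0 < \<Lambda>" "\<Lambda> < 1" "\<theta> \<le> \<Lambda>" "\<rho> \<le> \<Lambda>" using \<theta> \<rho> by (auto simp: \<Lambda>_def)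
  have qcond: "q1 = \<infinity> \<or> (\<exists>R. q1 = ereal R \<and> Q0 \<le> \<Lambda> * R)"
  proof (cases q1)
    case (real R)
    have R0: "0 < R" "Q0 < R" using real Q0 assms(4) by auto
    have "Q0 = \<rho> * R" using real R0 by (simp add: \<rho>_def)
    also have "\<dots> \<le> \<Lambda> * R" using \<Lambda> R0 by (intro mult_right_mono) auto
    finally show ?thesis using real by auto
  qed (use assms in auto)
  have YB: "mixed_norm q1 s p1 x \<le> 1 * mixed_norm q0 s p0 x powr \<Lambda>"
    if xm: "mixed_mem q0 s p0 x" and bd: "\<forall>j k. \<bar>w j * x j k\<bar> \<le> 1" for x
  proof -
    define a where "a = (\<lambda>j. 2 powr (real j * s) * lp_norm p0 (x j))"
    have ent: "\<bar>x j k\<bar> \<le> m j" for j k using bd wm by blast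
    have a0: "0 \<le> a j" for j using anon[OF xm] by (simp add: a_def)
    have bj: "2 powr (real j * s) * lp_norm p1 (x j) \<le> a j powr \<Lambda>" for j
    proof -
      have ba: "2 powr (real j * s) * lp_norm p1 (x j) \<le> a j"
        using xj1[OF xm, of j] by (simp add: a_def)
      have bt: "2 powr (real j * s) * lp_norm p1 (x j) \<le> (if p1 = \<infinity> then 1 else a j powr \<theta>)"
      proof (cases "p1 = \<infinity>")
        case True
        have "lp_norm p1 (x j) = (SUP k. \<bar>x j k\<bar>)" using True by (simp add: lp_inf)
        also have "\<dots> \<le> m j" by (rule cSUP_least) (use ent in auto)
        finally have "2 powr (real j * s) * lp_norm p1 (x j) \<le> 2 powr (real j * s) * m j"
          by (intro mult_left_mono) auto
        also have "2 powr (real j * s) * m j = 1" by (simp add: m_def flip: powr_add)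
        finally show ?thesis using True by simp
      next
        case False
        have "lp_norm p1 (x j) \<le> m j powr (1 - P0 / real_of_ereal p1) * lp_norm (ereal P0) (x j) powr (P0 / real_of_ereal p1)"
          using lp_interp[OF P0(2) _ _ ent False] P0 assms(2) xj[OF xm] by auto
        hence "2 powr (real j * s) * lp_norm p1 (x j) \<le> 2 powr (real j * s) * (m j powr (1 - \<theta>) * lp_norm p0 (x j) powr \<theta>)"
          using False P0 by (intro mult_left_mono) (auto simp: \<theta>_def)
        also have "\<dots> = a j powr \<theta>"
          unfolding m_def a_def using \<theta> lp_norm_nonneg[OF assms(1) xj[OF xm]] by (intro estB) auto
        finally show ?thesis using False by simp
      qed
      show ?thesis
      proof (cases "1 \<le> a j")
        case True
        have "(if p1 = \<infinity> then 1 else a j powr \<theta>) \<le> a j powr \<Lambda>"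
          using True \<Lambda> \<theta> by (auto intro: powr_mono ge_one_powr_ge_zero)
        thus ?thesis using bt by linarith
      next
        case False
        have "a j = a j powr 1" using a0[of j] by simp
        also have "\<dots> \<le> a j powr \<Lambda>" using False a0[of j] \<Lambda> by (intro powr_mono') auto
        finally show ?thesis using ba by linarith
      qed
    qed
    have P: "lp_mem q1 (\<lambda>j. a j powr \<Lambda>) \<and> lp_norm q1 (\<lambda>j. a j powr \<Lambda>) \<le> lp_norm (ereal Q0) a powr \<Lambda>"
      by (rule lp_pow[OF Q0(2) _ a0 \<Lambda>(1) _ qcond]) (use am[OF xm] Q0 \<Lambda> in \<open>auto simp: a_def\<close>)
    have "\<bar>2 powr (real j * s) * lp_norm p1 (x j)\<bar> \<le> \<bar>a j powr \<Lambda>\<bar>" for j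
      using bj[of j] lp_norm_nonneg[OF p1pos, of "x j"] xj1[OF xm, of j] by simp
    hence "lp_norm q1 (\<lambda>j. 2 powr (real j * s) * lp_norm p1 (x j)) \<le> lp_norm q1 (\<lambda>j. a j powr \<Lambda>)"
      using lp_mono[OF q1pos, of "\<lambda>j. a j powr \<Lambda>" "\<lambda>j. 2 powr (real j * s) * lp_norm p1 (x j)"] P by blast
    thus ?thesis using P Q0 by (simp add: mixed_norm_def a_def)
  qed
  have LB: "\<exists>N. \<forall>n\<ge>N. \<forall>x. mixed_mem q0 s p0 x \<longrightarrow> peaks w x n \<longrightarrow> R0 < mixed_norm q0 s p0 x" for R0
  proof -
    define R' where "R' = max R0 1"
    define N where "N = nat \<lceil>R' powr Q0 * R' powr P0\<rceil> + 1"
    show ?thesis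
    proof (intro exI[of _ N] allI impI)
      fix n x assume nN: "N \<le> n" and xm: "mixed_mem q0 s p0 x" and pk: "peaks w x n"
      define X where "X = mixed_norm q0 s p0 x"
      define a where "a = (\<lambda>j. 2 powr (real j * s) * lp_norm p0 (x j))"
      show "R0 < mixed_norm q0 s p0 x"
      proof (rule ccontr)
        assume "\<not> ?thesis"
        hence XR: "X \<le> R'" by (simp add: X_def R'_def)
        obtain S where S: "finite S" "card S = n" "\<forall>(j, k)\<in>S. \<bar>w j * x j k\<bar> = 1"
          using pk by (auto simp: peaks_def)
        have n1: "1 \<le> n" using nN by (simp add: N_def)
        hence Sne: "S \<noteq> {}" using S by auto
        have pe: "\<bar>x j k\<bar> = m j" if "(j, k) \<in> S" for j k using S(3) that wm by blast
        have al: "lp_norm p0 (x j) \<le> 2 powr (- (real j * s)) * X" for j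
          unfolding X_def by (rule alpha_bound[OF assms(3,1) xm])
        have aX: "a j \<le> X" for j unfolding a_def X_def by (rule mixed_term_le[OF assms(3,1) xm])
        have c1: "1 \<le> a j" if jS: "j \<in> fst ` S" for j
        proof -
          obtain k where jk: "(j, k) \<in> S" using jS by force
          have "m j \<le> lp_norm p0 (x j)" using pe[OF jk] mixed_entry_le[OF assms(1) xm, of j k] by linarith
          hence "2 powr (real j * s) * m j \<le> a j" unfolding a_def by (intro mult_left_mono) auto
          moreover have "2 powr (real j * s) * m j = 1" by (simp add: m_def flip: powr_add)
          ultimately show ?thesis by simp
        qed
        have X1: "1 \<le> X"
        proof -
          obtain j where "j \<in> fst ` S" using Sne by auto
          thus ?thesis using c1 aX[of j] by force
        qed
        have cb: "real (card (fst ` S)) \<le> X powr Q0"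
        proof -
          have fin: "finite (fst ` S)" using S by simp
          have "real (card (fst ` S)) = (\<Sum>j\<in>fst ` S. 1)" by simp
          also have "\<dots> \<le> (\<Sum>j\<in>fst ` S. \<bar>a j\<bar> powr Q0)"
          proof (rule sum_mono)
            fix j assume "j \<in> fst ` S"
            hence "1 \<le> a j" by (rule c1)
            thus "1 \<le> \<bar>a j\<bar> powr Q0" using Q0 by (intro ge_one_powr_ge_zero) auto
          qed
          also have "\<dots> \<le> lp_norm (ereal Q0) a powr Q0"
            by (rule lp_subsum[OF Q0(2) _ fin]) (use am[OF xm] Q0 in \<open>simp add: a_def\<close>)
          also have "lp_norm (ereal Q0) a = X" using Q0 by (simp add: X_def mixed_norm_def a_def)
          finally show ?thesis .
        qed
        have c3: "real (card {k. (j, k) \<in> S}) \<le> X powr P0" for j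
        proof -
          define K where "K = {k. (j, k) \<in> S}"
          have fK: "finite K" unfolding K_def
            using finite_imageI[OF S(1), of snd] by (rule finite_subset[rotated]) force
          have E: "(\<Sum>k\<in>K. \<bar>x j k\<bar> powr P0) = real (card K) * m j powr P0"
            using pe by (simp add: K_def)
          have "(\<Sum>k\<in>K. \<bar>x j k\<bar> powr P0) \<le> lp_norm p0 (x j) powr P0"
            using lp_subsum[OF P0(2) _ fK, of "x j"] xj[OF xm] P0 by simp
          also have "\<dots> \<le> (m j * X) powr P0"
            using al[of j] P0 lp_norm_nonneg[OF assms(1) xj[OF xm]] by (intro powr_mono2) (auto simp: m_def)
          also have "\<dots> = m j powr P0 * X powr P0"
            using X1 by (simp add: powr_mult m_def)
          finally have "real (card K) * m j powr P0 \<le> X powr P0 * m j powr P0"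
            unfolding E by (simp only: mult.commute)
          hence "real (card K) \<le> X powr P0" by (rule mult_right_le_imp_le) (simp add: m_def)
          thus ?thesis unfolding K_def by simp
        qed
        have "real n \<le> real (card (fst ` S)) * X powr P0"
          using card_blocks[OF S(1), of "X powr P0"] c3 S(2) by simp
        also have "\<dots> \<le> X powr Q0 * X powr P0"
          by (intro mult_right_mono cb) auto
        also have "\<dots> \<le> R' powr Q0 * R' powr P0"
          using X1 XR P0 Q0 by (intro mult_mono powr_mono2) auto
        also have "\<dots> < real N" unfolding N_def by linarith
        finally show False using nN by simp
      qed
    qed
  qed
  show ?thesis
    unfolding good_def
  proof (intro conjI allI impI)
    show "0 < 2 powr (real j * s)" for j by simp
    show "c0 (\<lambda>(j, k). 2 powr (real j * s) * x j k)" if "mixed_mem q0 s p0 x" for x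
      using C0[OF that] by (simp add: w_def)
    show "\<exists>C L. 0 < C \<and> L < 1 \<and> (\<forall>x. mixed_mem q0 s p0 x \<longrightarrow> (\<forall>j k. \<bar>2 powr (real j * s) * x j k\<bar> \<le> 1) \<longrightarrow>
        0 < mixed_norm q0 s p0 x \<longrightarrow> mixed_norm q1 s p1 x \<le> C * mixed_norm q0 s p0 x powr L)"
      using YB \<Lambda> by (intro exI[of _ 1] exI[of _ \<Lambda>]) (auto simp: w_def)
    show "\<exists>N. \<forall>n\<ge>N. \<forall>x. mixed_mem q0 s p0 x \<longrightarrow> peaks (\<lambda>j. 2 powr (real j * s)) x n \<longrightarrow> R < mixed_norm q0 s p0 x" for R
      using LB[of R] by (simp add: w_def)
  qed
qed


lemma good_exists:
  assumes "t \<le> s" "0 < p0" "p0 < p1" "0 < q0" "0 < q1" "t < s \<or> q0 < q1"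
  shows "\<exists>w. good q0 s p0 q1 t p1 w"
proof (cases "t < s")
  case True thus ?thesis using goodA[OF True assms(2-5)] by blast
next
  case False
  hence ts: "t = s" "q0 < q1" using assms by auto
  show ?thesis using goodB[OF assms(2,3,4) ts(2), of s] ts(1) by blast
qed

lemma finish:
  fixes C L \<epsilon> X Y :: real
  assumes "0 < C" "L < 1" "0 < \<epsilon>" "max 1 ((C / \<epsilon>) powr (1 / (1 - L))) < X" "Y \<le> C * X powr L"
  shows "Y \<le> \<epsilon> * X"
proof -
  define B where "B = (C / \<epsilon>) powr (1 / (1 - L))"
  have B0: "0 < B" unfolding B_def using assms(1,3) by (simp add: powr_gt_zero)
  have BX: "B \<le> X" using assms(4) by (simp add: B_def)
  have X0: "0 < X" using assms(4) by simp
  have "X powr (L - 1) \<le> B powr (L - 1)" using assms(2) B0 BX by (intro powr_mono2') auto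
  also have "B powr (L - 1) = (C / \<epsilon>) powr (1 / (1 - L) * (L - 1))"
    unfolding B_def by (simp add: powr_powr)
  also have "1 / (1 - L) * (L - 1) = - 1" using assms(2) by (simp add: field_simps)
  also have "(C / \<epsilon>) powr (- 1) = \<epsilon> / C" using assms by (simp add: powr_minus_divide)
  finally have a: "X powr (L - 1) \<le> \<epsilon> / C" .
  have "X powr L = X powr ((L - 1) + 1)" by simp
  also have "\<dots> = X powr (L - 1) * X powr 1" by (rule powr_add)
  also have "X powr 1 = X" using X0 by simp
  finally have "X powr L = X powr (L - 1) * X" .
  have b: "C * X powr (L - 1) \<le> \<epsilon>" using mult_left_mono[OF a, of C] assms(1) by simp
  have "C * X powr L = (C * X powr (L - 1)) * X" using \<open>X powr L = X powr (L - 1) * X\<close> by simp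
  also have "\<dots> \<le> \<epsilon> * X" using b X0 by (intro mult_right_mono) auto
  finally show ?thesis using assms(5) by linarith
qed

lemma lin_comb_in:
  assumes "lin_subspace M" "\<And>i. i < n \<Longrightarrow> v i \<in> M"
  shows "lin_comb n d v \<in> M"
  using assms(2)
proof (induction n)
  case 0 thus ?case using assms(1) by (simp add: lin_comb_def lin_subspace_def)
next
  case (Suc n)
  have a: "lin_comb n d v \<in> M" using Suc by simp
  have b: "(\<lambda>j k. d n * v n j k) \<in> M" using assms(1) Suc.prems[of n] by (simp add: lin_subspace_def)
  have "lin_comb (Suc n) d v = (\<lambda>j k. lin_comb n d v j k + d n * v n j k)"
    by (simp add: lin_comb_def)
  thus ?case using a b assms(1) by (simp add: lin_subspace_def)
qed

lemma ifmul: "(a::real) * (if P then 1 else 0) = (if P then a else 0)"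
  "(if P then 1 else 0) * (a::real) = (if P then a else 0)" by simp_all

lemma bern_nonneg:
  assumes hyps: "t \<le> s" "0 < p0" "p0 < p1" "0 < q0" "0 < q1" "t < s \<or> q0 < q1"
  shows "0 \<le> bernstein (mixed_space q0 s p0) (mixed_norm q0 s p0) (mixed_norm q1 t p1) id n"
proof -
  have emb: "mixed_space q0 s p0 \<subseteq> mixed_space q1 t p1" by (rule embedding[OF hyps])
  define e where "e = (\<lambda>l::nat. \<lambda>(j::nat) (k::nat). if j = 0 \<and> k = l then (1::real) else 0)"
  have lc: "lin_comb n c e = (\<lambda>j k. if j = 0 \<and> k < n then c k else 0)" for c
    by (intro ext) (auto simp: lin_comb_def e_def ifmul)
  have li: "lin_indep n e"
    unfolding lin_indep_def
  proof (intro allI impI)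
    fix c l assume "lin_comb n c e = (\<lambda>j k. 0)" "l < n"
    thus "c l = 0" unfolding lc by (metis (mono_tags, lifting))
  qed
  define V0 where "V0 = {lin_comb n c e | c. True}"
  have V0X: "V0 \<subseteq> mixed_space q0 s p0"
  proof
    fix x assume "x \<in> V0"
    then obtain c where xc: "x = (\<lambda>j k. if j = 0 \<and> k < n then c k else 0)" by (auto simp: V0_def lc)
    have m1: "lp_mem p0 (x j)" for j by (rule lp_finsupp[OF hyps(2), of n]) (simp add: xc)
    have z: "lp_norm p0 (x j) = 0" if "1 \<le> j" for j
    proof -
      have "x j = (\<lambda>k. 0)" using that by (simp add: xc)
      thus ?thesis using lp_zero[OF hyps(2)] by simp
    qed
    have m2: "lp_mem q0 (\<lambda>j. 2 powr (real j * s) * lp_norm p0 (x j))"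
      by (rule lp_finsupp[OF hyps(4), of 1]) (simp add: z)
    show "x \<in> mixed_space q0 s p0" using m1 m2 by (simp add: mixed_space_def mixed_mem_def)
  qed
  have sd: "subspace_dim (mixed_space q0 s p0) n V0" using V0X li by (auto simp: subspace_dim_def V0_def)
  have "0 \<le> (INF x\<in>{x \<in> V0. mixed_norm q0 s p0 x = 1}. ereal (mixed_norm q1 t p1 (id x)))"
  proof (rule INF_greatest)
    fix x assume "x \<in> {x \<in> V0. mixed_norm q0 s p0 x = 1}"
    hence "mixed_mem q1 t p1 x" using V0X emb by (auto simp: mixed_space_def)
    thus "0 \<le> ereal (mixed_norm q1 t p1 (id x))" using mixed_nonneg[OF hyps(5)] by simp
  qed
  also have "\<dots> \<le> bernstein (mixed_space q0 s p0) (mixed_norm q0 s p0) (mixed_norm q1 t p1) id n"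
    unfolding bernstein_def by (rule SUP_upper) (use sd in simp)
  finally show ?thesis .
qed

lemma bern_upper:
  assumes hyps: "t \<le> s" "0 < p0" "p0 < p1" "0 < q0" "0 < q1" "t < s \<or> q0 < q1"
    and g: "good q0 s p0 q1 t p1 w" and eps: "0 < \<epsilon>"
  shows "\<exists>N. \<forall>n\<ge>N. bernstein (mixed_space q0 s p0) (mixed_norm q0 s p0) (mixed_norm q1 t p1) id n \<le> ereal \<epsilon>"
proof -
  have emb: "mixed_space q0 s p0 \<subseteq> mixed_space q1 t p1" by (rule embedding[OF hyps])
  have p1pos: "0 < p1" using hyps by simp
  from g obtain C L where wpos: "\<forall>j. 0 < w j"
    and c0x: "\<forall>x. mixed_mem q0 s p0 x \<longrightarrow> c0 (\<lambda>(j, k). w j * x j k)"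
    and CL: "0 < C" "L < 1"
    and YB: "\<forall>x. mixed_mem q0 s p0 x \<longrightarrow> (\<forall>j k. \<bar>w j * x j k\<bar> \<le> 1) \<longrightarrow>
        0 < mixed_norm q0 s p0 x \<longrightarrow> mixed_norm q1 t p1 x \<le> C * mixed_norm q0 s p0 x powr L"
    and LB: "\<forall>R. \<exists>N. \<forall>n\<ge>N. \<forall>x. mixed_mem q0 s p0 x \<longrightarrow> peaks w x n \<longrightarrow> R < mixed_norm q0 s p0 x"
    unfolding good_def by blast
  define R where "R = max 1 ((C / \<epsilon>) powr (1 / (1 - L)))"
  obtain N0 where N0: "\<forall>n\<ge>N0. \<forall>x. mixed_mem q0 s p0 x \<longrightarrow> peaks w x n \<longrightarrow> R < mixed_norm q0 s p0 x"
    using LB by blast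
  show ?thesis
  proof (intro exI[of _ N0] allI impI)
    fix n assume nN: "N0 \<le> n"
    show "bernstein (mixed_space q0 s p0) (mixed_norm q0 s p0) (mixed_norm q1 t p1) id n \<le> ereal \<epsilon>"
      unfolding bernstein_def
    proof (rule SUP_least)
      fix V assume "V \<in> {V. subspace_dim (mixed_space q0 s p0) n V}"
      then obtain v where VX: "V \<subseteq> mixed_space q0 s p0" and li: "lin_indep n v"
        and Veq: "V = {lin_comb n c v | c. True}" by (auto simp: subspace_dim_def)
      define vv where "vv = (\<lambda>l. \<lambda>(j, k). w j * v l j k)"
      have vvc: "(\<Sum>l<n. c l * vv l (j, k)) = w j * lin_comb n c v j k" for c j k
        by (simp add: vv_def lin_comb_def sum_distrib_left mult.left_commute)
      have indep: "\<forall>l<n. c l = 0" if a: "\<forall>i. (\<Sum>l<n. c l * vv l i) = 0" for c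
      proof -
        have "lin_comb n c v = (\<lambda>j k. 0)"
        proof (intro ext)
          fix j k
          have "w j * lin_comb n c v j k = 0" using a[rule_format, of "(j, k)"] vvc by simp
          moreover have "w j \<noteq> 0" using wpos by (metis less_irrefl)
          ultimately show "lin_comb n c v j k = 0" by simp
        qed
        thus "\<forall>l<n. c l = 0" using li by (simp add: lin_indep_def)
      qed
      have vl: "v l \<in> V" if "l < n" for l
      proof -
        have "lin_comb n (\<lambda>i. if i = l then 1 else 0) v = v l"
          using that by (intro ext) (simp add: lin_comb_def ifmul)
        thus ?thesis unfolding Veq by (metis (mono_tags, lifting) mem_Collect_eq)
      qed
      have cz: "c0 (vv l)" if "l < n" for l
        using c0x vl[OF that] VX by (auto simp: vv_def mixed_space_def)
      obtain c S where cS: "\<forall>i. \<bar>\<Sum>l<n. c l * vv l i\<bar> \<le> 1" "finite S" "card S = n"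
          "\<forall>i\<in>S. \<bar>\<Sum>l<n. c l * vv l i\<bar> = 1"
        using peak[where n=n and v=vv] indep cz by blast
      define x where "x = lin_comb n c v"
      have xV: "x \<in> V" using Veq by (auto simp: x_def)
      have xm: "mixed_mem q0 s p0 x" using xV VX by (auto simp: mixed_space_def)
      have xm1: "mixed_mem q1 t p1 x" using xV VX emb by (auto simp: mixed_space_def)
      have bd: "\<forall>j k. \<bar>w j * x j k\<bar> \<le> 1"
      proof (intro allI)
        fix j k show "\<bar>w j * x j k\<bar> \<le> 1" using cS(1)[rule_format, of "(j, k)"] by (simp add: vvc x_def)
      qed
      have pk: "peaks w x n" unfolding peaks_def
      proof (intro conjI exI[of _ S])
        show "\<forall>(j, k)\<in>S. \<bar>w j * x j k\<bar> = 1"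
        proof (clarify)
          fix j k assume "(j, k) \<in> S"
          thus "\<bar>w j * x j k\<bar> = 1" using cS(4) by (auto simp: vvc x_def)
        qed
      qed (use bd cS in auto)
      have XR: "R < mixed_norm q0 s p0 x" using N0 nN xm pk by blast
      have X0: "0 < mixed_norm q0 s p0 x" using XR by (simp add: R_def)
      have Yle: "mixed_norm q1 t p1 x \<le> C * mixed_norm q0 s p0 x powr L" using YB xm bd X0 by blast
      have Ye: "mixed_norm q1 t p1 x \<le> \<epsilon> * mixed_norm q0 s p0 x"
        by (rule finish[OF CL eps _ Yle]) (use XR in \<open>simp add: R_def\<close>)
      define r where "r = 1 / mixed_norm q0 s p0 x"
      define x' where "x' = lin_comb n (\<lambda>l. r * c l) v"
      have x'eq: "x' = (\<lambda>j k. r * x j k)"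
        by (intro ext) (simp add: x'_def x_def lin_comb_def sum_distrib_left mult.assoc)
      have x'V: "x' \<in> V" using Veq by (auto simp: x'_def)
      have r0: "0 < r" using X0 by (simp add: r_def)
      have n1: "mixed_norm q0 s p0 x' = 1"
        using mixed_homog[OF hyps(4,2) xm, of r] X0 r0 by (simp add: x'eq r_def)
      have n2: "mixed_norm q1 t p1 x' \<le> \<epsilon>"
      proof -
        have "mixed_norm q1 t p1 x' = r * mixed_norm q1 t p1 x"
          using mixed_homog[OF hyps(5) p1pos xm1, of r] r0 by (simp add: x'eq)
        also have "\<dots> \<le> r * (\<epsilon> * mixed_norm q0 s p0 x)" using Ye r0 by (intro mult_left_mono) auto
        also have "\<dots> = \<epsilon>" using X0 by (simp add: r_def)
        finally show ?thesis .
      qed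
      have "(INF x\<in>{x \<in> V. mixed_norm q0 s p0 x = 1}. ereal (mixed_norm q1 t p1 (id x))) \<le> ereal (mixed_norm q1 t p1 (id x'))"
        by (rule INF_lower) (use x'V n1 in auto)
      also have "\<dots> \<le> ereal \<epsilon>" using n2 by simp
      finally show "(INF x\<in>{x \<in> V. mixed_norm q0 s p0 x = 1}. ereal (mixed_norm q1 t p1 (id x))) \<le> ereal \<epsilon>" .
    qed
  qed
qed

lemma fss:
  assumes hyps: "t \<le> s" "0 < p0" "p0 < p1" "0 < q0" "0 < q1" "t < s \<or> q0 < q1"
  shows "fin_strictly_singular (mixed_space q0 s p0) (mixed_norm q0 s p0) (mixed_norm q1 t p1) id"
proof -
  obtain w where g: "good q0 s p0 q1 t p1 w" using good_exists[OF hyps] by blast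
  show ?thesis unfolding fin_strictly_singular_def
  proof (rule order_tendstoI)
    fix a :: ereal assume "a < 0"
    thus "eventually (\<lambda>n. a < bernstein (mixed_space q0 s p0) (mixed_norm q0 s p0) (mixed_norm q1 t p1) id n) sequentially"
      using bern_nonneg[OF hyps] by (auto intro: always_eventually order_less_le_trans)
  next
    fix a :: ereal assume a: "0 < a"
    obtain z where z: "0 < ereal z" "ereal z < a" using ereal_dense2[OF a] by blast
    have "z > 0" using z by simp
    then obtain N where N: "\<forall>n\<ge>N. bernstein (mixed_space q0 s p0) (mixed_norm q0 s p0) (mixed_norm q1 t p1) id n \<le> ereal z"
      using bern_upper[OF hyps g] by blast
    show "eventually (\<lambda>n. bernstein (mixed_space q0 s p0) (mixed_norm q0 s p0) (mixed_norm q1 t p1) id n < a) sequentially"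
      unfolding eventually_sequentially using N z by (meson order_le_less_trans)
  qed
qed

lemma ss:
  assumes hyps: "t \<le> s" "0 < p0" "p0 < p1" "0 < q0" "0 < q1" "t < s \<or> q0 < q1"
  shows "strictly_singular (mixed_space q0 s p0) (mixed_norm q0 s p0) (mixed_norm q1 t p1) id"
  unfolding strictly_singular_def
proof
  assume "\<exists>M. inf_dim_subspace (mixed_space q0 s p0) M \<and>
           (\<exists>c C. 0 < c \<and> 0 < C \<and> (\<forall>x\<in>M. c * mixed_norm q0 s p0 x \<le> mixed_norm q1 t p1 (id x) \<and> mixed_norm q1 t p1 (id x) \<le> C * mixed_norm q0 s p0 x))"
  then obtain M c where M: "inf_dim_subspace (mixed_space q0 s p0) M" and c: "0 < c"
    and low: "\<forall>x\<in>M. c * mixed_norm q0 s p0 x \<le> mixed_norm q1 t p1 x" by auto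
  have "fin_strictly_singular (mixed_space q0 s p0) (mixed_norm q0 s p0) (mixed_norm q1 t p1) id"
    by (rule fss[OF hyps])
  hence "eventually (\<lambda>n. bernstein (mixed_space q0 s p0) (mixed_norm q0 s p0) (mixed_norm q1 t p1) id n < ereal c) sequentially"
    unfolding fin_strictly_singular_def using c by (intro order_tendstoD(2)) auto
  then obtain N where N: "bernstein (mixed_space q0 s p0) (mixed_norm q0 s p0) (mixed_norm q1 t p1) id N < ereal c"
    by (auto simp: eventually_sequentially)
  obtain v where v: "\<forall>i<N. v i \<in> M" "lin_indep N v" using M unfolding inf_dim_subspace_def by blast
  define V where "V = {lin_comb N d v | d. True}"
  have VM: "V \<subseteq> M" using lin_comb_in[of M N v] M v(1) by (auto simp: V_def inf_dim_subspace_def)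
  have sd: "subspace_dim (mixed_space q0 s p0) N V"
    using VM M v(2) by (auto simp: subspace_dim_def inf_dim_subspace_def V_def)
  have "ereal c \<le> (INF x\<in>{x \<in> V. mixed_norm q0 s p0 x = 1}. ereal (mixed_norm q1 t p1 (id x)))"
  proof (rule INF_greatest)
    fix x assume "x \<in> {x \<in> V. mixed_norm q0 s p0 x = 1}"
    thus "ereal c \<le> ereal (mixed_norm q1 t p1 (id x))" using low VM by force
  qed
  also have "\<dots> \<le> bernstein (mixed_space q0 s p0) (mixed_norm q0 s p0) (mixed_norm q1 t p1) id N"
    unfolding bernstein_def by (rule SUP_upper) (use sd in simp)
  finally show False using N by simp
qed

theorem corollary3p6:
  fixes s t :: real and p0 p1 q0 q1 :: ereal
  assumes "s \<ge> t"
    and "0 < p0" and "p0 < p1" and "p1 \<le> \<infinity>"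
    and "0 < q0" and "q0 \<le> \<infinity>" and "0 < q1" and "q1 \<le> \<infinity>"
    and "s > t \<or> q0 < q1"
  shows "mixed_space q0 s p0 \<subseteq> mixed_space q1 t p1
    \<and> fin_strictly_singular (mixed_space q0 s p0) (mixed_norm q0 s p0) (mixed_norm q1 t p1) id
    \<and> strictly_singular (mixed_space q0 s p0) (mixed_norm q0 s p0) (mixed_norm q1 t p1) id"
  using embedding[OF assms(1,2,3,5,7,9)] fss[OF assms(1,2,3,5,7,9)] ss[OF assms(1,2,3,5,7,9)] by blast


end
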